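(* Let $d\ge 1$, let $N\ge 1$ be an integer with $2N>d-2$, let $T>0$ and $0<\Lambda<T$. Then the gap-regularized truncated self-intersection local time $L^{(2N)}(\Lambda)$ belongs to $(S)^*$, and its chaos kernel functions are as follows: all kernels $F_{\mathbf m}$ with $\mathbf m$ having some odd component, or with $|\mathbf m|<2N$, vanish; and for $\mathbf m=2\mathbf n$ with $n=|\mathbf n|\ge N$, $$\varphi_{\Lambda,2\mathbf n}(u_1,\dots,u_{2n})=\varphi_{2\mathbf n}(u_1,\dots,u_{2n})-\Theta\big(\Lambda-(v-u)\big)\,\rho_{2\mathbf n}(u_1,\dots,u_{2n}),$$ where $$\rho_{2\mathbf n}(u_1,\dots,u_{2n}):=\int_{D}dt_1\,dt_2\;\psi_{2\mathbf n}(u_1,\dots,u_{2n};t_1,t_2),\qquad D=\{(t_1,t_2):\,0<t_1\le u,\ v\le t_2<T,\ t_2-t_1<\Lambda\}.$$ Consequently $L^{(2N)}-L^{(2N)}(\Lambda)$ has kernel functions $\Theta(\Lambda-(v-u))\rho_{2\mathbf n}$ ($n\ge N$), supported in $\{0<u<v<T,\ v-u<\Lambda\}$. Moreover, if $\Lambda<v$, $u<T-\Lambda$ and $v-u<\Lambda$, then for $d/2+n\neq 2$ $$\rho_{2\mathbf n}=\frac{(2\pi)^{-d/2}}{\mathbf n!}\Big(-\frac12\Big)^n\frac{1}{d/2+n-1}\left(\frac{(v-u)^{-d/2-n+2}-\Lambda^{-d/2-n+2}}{d/2+n-2}+(v-u-\Lambda)\Lambda^{-d/2-n+1}\right),$$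 and for $d=2$, $n=1$ $$\rho_{2}(u_1,u_2)=\frac{1}{4\pi}\left(\ln(v-u)-\ln\Lambda+\frac{\Lambda-v+u}{\Lambda}\right).$$
   Context: Fix $d\ge1$, $T>0$. Let $\mu$ be the ($d$-dimensional) white noise measure on $S^*(\mathbb R,\mathbb R^d)$, i.e. $\int e^{i\langle\omega,\mathbf f\rangle}d\mu(\omega)=e^{-\frac12\langle\mathbf f,\mathbf f\rangle}$ for $\mathbf f=(f_1,\dots,f_d)\in S(\mathbb R,\mathbb R^d)$, with $\langle\mathbf f,\mathbf f\rangle=\sum_i\int f_i^2$, and $\mathbf B(t)=\langle\omega,1\!\!1_{[0,t]}\rangle$ the resulting $d$-dimensional Brownian motion. $(L^2)=L^2(\mu)$, and $(S)\subset(L^2)\subset(S)^*$ is the Hida Gel'fand triple. The S-transform of $\Phi\in(S)^*$ is $(S\Phi)(\mathbf f)=\langle\!\langle\Phi,:\exp\langle\cdot,\mathbf f\rangle:\rangle\!\rangle$ with $:\exp\langle\omega,\mathbf f\rangle:=e^{-\frac12\langle\mathbf f,\mathbf f\rangle}e^{\langle\omega,\mathbf f\rangle}$. Multi-index notation: $\mathbf m=(m_1,\dots,m_d)\in\mathbb N_0^d$, $|\mathbf m|=\sum m_i$, $\mathbf m!=\prod m_i!$; for $\mathbf n$ we write $n=|\mathbf n|$. The kernel functions (chaos kernels) $F_{\mathbf m}$ of $\Phi$ are defined by $(S\Phi)(\mathbf f)=\sum_{\mathbf m}\int F_{\mathbf m}(t_1,\dots,t_{|\mathbf m|})\bigotimes_{i=1}^d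 f_i^{\otimes m_i}(t_1,\dots,t_{|\mathbf m|})\,d^{|\mathbf m|}t$; for $\Phi\in(L^2)$, $\|\Phi\|^2_{(L^2)}=\sum_{\mathbf m}\mathbf m!\,\|F_{\mathbf m}\|^2_{L^2}$. For $\Phi\in(S)^*$, $\Phi^{(k)}$ denotes the projection keeping only the kernels with $|\mathbf m|\ge k$. For $0<t_1<t_2$, the Donsker delta $\delta(\mathbf B(t_2)-\mathbf B(t_1))\in(S)^*$ has vanishing kernels for multi-indices with an odd component, and for $\mathbf m=2\mathbf n$ its kernel is $$\psi_{2\mathbf n}(u_1,\dots,u_{2n};t_1,t_2)=\frac{1}{\mathbf n!}(2\pi)^{-d/2}(t_2-t_1)^{-\frac d2-n}\Big(-\frac12\Big)^n\prod_{k=1}^{2n}1\!\!1_{[t_1,t_2]}(u_k).$$ For $2N>d-2$ the truncated self-intersection local time is $L^{(2N)}=\int_{0<t_1<t_2<T}\delta^{(2N)}(\mathbf B(t_2)-\mathbf B(t_1))\,dt_1dt_2\in(S)^*$, with kernels $\varphi_{2\mathbf n}(u_1,\dots,u_{2n})=\int_{0<t_1<t_2<T}\psi_{2\mathbf n}(u_1,\dots,u_{2n};t_1,t_2)\,dt_1dt_2$ for $n\ge N$ (and zero otherwise). For $\Lambda>0$ the gap-regularized version is $L^{(2N)}(\Lambda)=\int_{0<t_1<t_2<T,\ t_2-t_1>\Lambda}\delta^{(2N)}(\mathbf B(t_2)-\mathbf B(t_1))\,dt_1dt_2$. Throughout, $u=\min(u_1,\dots,u_{2n})$, $v=\max(u_1,\dots,u_{2n})$,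 and $\Theta$ is the indicator function of the positive half line. *)

theory Defs
  imports "HOL-Analysis.Analysis"
begin

text \<open>
  A multi-index is a function m :: nat => nat supported in {..<d}
  (component i of the multi-index is m i, i < d).  A Hida distribution is
  represented by its family of chaos kernels: for every multi-index m a
  kernel function F_m on R^|m| (points of R^|m| are x :: nat => real, only
  the coordinates x 0, ..., x (|m|-1) matter).
\<close>

type_synonym kernels = "(nat \<Rightarrow> nat) \<Rightarrow> (nat \<Rightarrow> real) \<Rightarrow> real"

definition multi_indices :: "nat \<Rightarrow> (nat \<Rightarrow> nat) set" where
  "multi_indices d = {m. \<forall>i\<ge>d. m i = 0}"

definition mabs :: "nat \<Rightarrow> (nat \<Rightarrow> nat) \<Rightarrow> nat" where
  "mabs d m = (\<Sum>i<d. m i)"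

definition mfact :: "nat \<Rightarrow> (nat \<Rightarrow> nat) \<Rightarrow> real" where
  "mfact d m = (\<Prod>i<d. fact (m i))"

text \<open>u = min and v = max of the first k variables.\<close>
definition kmin :: "nat \<Rightarrow> (nat \<Rightarrow> real) \<Rightarrow> real" where
  "kmin k x = Min (x ` {..<k})"

definition kmax :: "nat \<Rightarrow> (nat \<Rightarrow> real) \<Rightarrow> real" where
  "kmax k x = Max (x ` {..<k})"

definition Theta :: "real \<Rightarrow> real" where
  "Theta x = (if x > 0 then 1 else 0)"

text \<open>Physicists' Hermite polynomials and the Hermite functions
  (orthonormal basis of L^2(R), eigenfunctions of A = -D^2 + x^2 + 1 with
  eigenvalues 2k+2).\<close>
fun hermite_poly :: "nat \<Rightarrow> real \<Rightarrow> real" where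
  "hermite_poly 0 x = 1"
| "hermite_poly (Suc 0) x = 2 * x"
| "hermite_poly (Suc (Suc k)) x =
     2 * x * hermite_poly (Suc k) x - 2 * real (Suc k) * hermite_poly k x"

definition hermite_fun :: "nat \<Rightarrow> real \<Rightarrow> real" where
  "hermite_fun k x = hermite_poly k x * exp (- (x\<^sup>2) / 2)
                      / sqrt (2 ^ k * fact k * sqrt pi)"

definition herm_test :: "nat \<Rightarrow> (nat \<Rightarrow> nat) \<Rightarrow> (nat \<Rightarrow> real) \<Rightarrow> real" where
  "herm_test n \<kappa> x = (\<Prod>j<n. hermite_fun (\<kappa> j) (x j))"

definition herm_coeff :: "nat \<Rightarrow> ((nat \<Rightarrow> real) \<Rightarrow> real) \<Rightarrow> (nat \<Rightarrow> nat) \<Rightarrow> real" where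
  "herm_coeff n F \<kappa> = (LINT x | PiM {..<n} (\<lambda>_. lborel). F x * herm_test n \<kappa> x)"

definition neg_norm2 :: "nat \<Rightarrow> nat \<Rightarrow> ((nat \<Rightarrow> real) \<Rightarrow> real) \<Rightarrow> ennreal" where
  "neg_norm2 p n F =
     (\<integral>\<^sup>+ \<kappa>. ennreal ((\<Prod>j<n. 1 / (2 * real (\<kappa> j) + 2) ^ (2 * p)) * (herm_coeff n F \<kappa>)\<^sup>2)
        \<partial>count_space (PiE {..<n} (\<lambda>_. UNIV)))"

definition hida_dist :: "nat \<Rightarrow> kernels \<Rightarrow> bool" where
  "hida_dist d \<Phi> \<longleftrightarrow>
     (\<forall>m. m \<notin> multi_indices d \<longrightarrow> (\<forall>x. \<Phi> m x = 0)) \<and>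
     (\<forall>m \<in> multi_indices d. \<forall>\<kappa>.
        integrable (PiM {..<mabs d m} (\<lambda>_. lborel)) (\<lambda>x. \<Phi> m x * herm_test (mabs d m) \<kappa> x)) \<and>
     (\<exists>p::nat. (\<integral>\<^sup>+ m. ennreal (mfact d m) * neg_norm2 p (mabs d m) (\<Phi> m)
                     \<partial>count_space (multi_indices d)) < \<infinity>)"

text \<open>Kernel psi_{2n}(u_1..u_{2n}; t1, t2) of delta(B(t2)-B(t1)), indexed
  by the half multi-index n.\<close>
definition psi :: "nat \<Rightarrow> (nat \<Rightarrow> nat) \<Rightarrow> real \<Rightarrow> real \<Rightarrow> (nat \<Rightarrow> real) \<Rightarrow> real" where
  "psi d n t1 t2 x =
     (1 / mfact d n) * (2 * pi) powr (- (real d / 2))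
     * (t2 - t1) powr (- (real d / 2) - real (mabs d n)) * (- 1 / 2) ^ (mabs d n)
     * (\<Prod>k<2 * mabs d n. indicator {t1..t2} (x k))"

definition delta_trunc :: "nat \<Rightarrow> nat \<Rightarrow> real \<Rightarrow> real \<Rightarrow> kernels" where
  "delta_trunc d N t1 t2 m x =
     (if m \<in> multi_indices d \<and> (\<forall>i. even (m i)) \<and> mabs d m \<ge> 2 * N
      then psi d (\<lambda>i. m i div 2) t1 t2 x else 0)"

definition hida_integral :: "(real \<times> real) set \<Rightarrow> (real \<times> real \<Rightarrow> kernels) \<Rightarrow> kernels" where
  "hida_integral A \<Phi> = (\<lambda>m x. LINT t : A | lborel. \<Phi> t m x)"

definition SILT :: "nat \<Rightarrow> nat \<Rightarrow> real \<Rightarrow> kernels" where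
  "SILT d N T = hida_integral {(t1, t2). 0 < t1 \<and> t1 < t2 \<and> t2 < T}
                   (\<lambda>(t1, t2). delta_trunc d N t1 t2)"

definition SILT_gap :: "nat \<Rightarrow> nat \<Rightarrow> real \<Rightarrow> real \<Rightarrow> kernels" where
  "SILT_gap d N T \<Lambda> = hida_integral {(t1, t2). 0 < t1 \<and> t1 < t2 \<and> t2 < T \<and> t2 - t1 > \<Lambda>}
                   (\<lambda>(t1, t2). delta_trunc d N t1 t2)"

definition rho :: "nat \<Rightarrow> real \<Rightarrow> real \<Rightarrow> (nat \<Rightarrow> nat) \<Rightarrow> (nat \<Rightarrow> real) \<Rightarrow> real" where
  "rho d T \<Lambda> n x =
     (LINT t : {(t1, t2). 0 < t1 \<and> t1 \<le> kmin (2 * mabs d n) x \<and> kmax (2 * mabs d n) x \<le> t2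
                         \<and> t2 < T \<and> t2 - t1 < \<Lambda>} | lborel.
        psi d n (fst t) (snd t) x)"

end

theory Submission
  imports Defs "HOL-Probability.Distributions"
begin


lemma hp_rec: "hermite_poly (Suc k) x = 2*x*hermite_poly k x - 2*real k*hermite_poly (k-1) x"
  by (cases k) auto

lemma hp_deriv_aux: "(\<forall>x. (hermite_poly k has_real_derivative (2*real k * hermite_poly (k-1) x)) (at x)) \<and>
   (\<forall>x. (hermite_poly (Suc k) has_real_derivative (2*real (Suc k) * hermite_poly k x)) (at x))"
proof (induction k)
  case 0
  show ?case by (auto intro!: derivative_eq_intros)
next
  case (Suc k)
  have "(hermite_poly (Suc (Suc k)) has_real_derivative (2*real (Suc (Suc k)) * hermite_poly (Suc k) x)) (at x)" for x
  proof -
    have e: "hermite_poly (Suc (Suc k)) = (\<lambda>x. 2 * x * hermite_poly (Suc k) x - 2 * real (Suc k) * hermite_poly k x)"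
      by auto
    have d: "((\<lambda>x. 2 * x * hermite_poly (Suc k) x - 2 * real (Suc k) * hermite_poly k x) has_real_derivative
       (2 * hermite_poly (Suc k) x + 2*x*(2*real (Suc k) * hermite_poly k x) - 2 * real (Suc k) * (2*real k * hermite_poly (k-1) x))) (at x)"
      using Suc.IH by (auto intro!: derivative_eq_intros)
    have "2 * hermite_poly (Suc k) x + 2*x*(2*real (Suc k) * hermite_poly k x) - 2 * real (Suc k) * (2*real k * hermite_poly (k-1) x)
      = 2*real (Suc (Suc k)) * hermite_poly (Suc k) x"
      by (simp add: hp_rec[of k x] algebra_simps)
    with d e show ?thesis by simp
  qed
  then show ?case using Suc.IH by (simp del: hermite_poly.simps)
qed

lemma hp_deriv: "(hermite_poly k has_real_derivative (2*real k * hermite_poly (k-1) x)) (at x)"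
  using hp_deriv_aux by blast

lemma hp_cont[continuous_intros]: "continuous_on S (hermite_poly k)"
  by (meson continuous_at_imp_continuous_on DERIV_isCont hp_deriv)

lemma hp_isCont: "isCont (hermite_poly k) x"
  using DERIV_isCont hp_deriv by blast

lemma hp_meas[measurable]: "hermite_poly k \<in> borel_measurable borel"
  using borel_measurable_continuous_onI hp_cont by blast

lemma hp_bound_aux: "(\<exists>M. \<forall>x. \<bar>hermite_poly k x\<bar> \<le> M * (1+\<bar>x\<bar>)^k) \<and> (\<exists>M. \<forall>x. \<bar>hermite_poly (Suc k) x\<bar> \<le> M * (1+\<bar>x\<bar>)^Suc k)"
proof (induction k)
  case 0
  show ?case by (auto intro!: exI[of _ 2])
next
  case (Suc k)
  then obtain M1 M2 where M1: "\<And>x. \<bar>hermite_poly k x\<bar> \<le> M1 * (1+\<bar>x\<bar>)^k"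
     and M2: "\<And>x. \<bar>hermite_poly (Suc k) x\<bar> \<le> M2 * (1+\<bar>x\<bar>)^Suc k" by blast
  have "\<bar>hermite_poly (Suc (Suc k)) x\<bar> \<le> (2*M2 + 2*real (Suc k)*M1) * (1+\<bar>x\<bar>)^Suc (Suc k)" for x
  proof -
    have p1: "(1+\<bar>x\<bar>)^k \<le> (1+\<bar>x\<bar>)^Suc (Suc k)"
      by (rule power_increasing) auto
    have p2: "(1+\<bar>x\<bar>)^Suc k * \<bar>x\<bar> \<le> (1+\<bar>x\<bar>)^Suc (Suc k)"
    proof -
      have "(1+\<bar>x\<bar>)^Suc k * \<bar>x\<bar> \<le> (1+\<bar>x\<bar>)^Suc k * (1+\<bar>x\<bar>)"
        by (rule mult_left_mono) auto
      then show ?thesis by (simp only: power_Suc2[of _ "Suc k"])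
    qed
    note p = p1 p2
    have M1p: "M1 \<ge> 0" using M1[of 0] abs_ge_zero[of "hermite_poly k 0"] by simp
    have M2p: "M2 \<ge> 0" using M2[of 0] abs_ge_zero[of "hermite_poly (Suc k) 0"] by simp
    have "\<bar>hermite_poly (Suc (Suc k)) x\<bar> = \<bar>2*x*hermite_poly (Suc k) x - 2*real (Suc k)*hermite_poly k x\<bar>"
      by (simp del: hermite_poly.simps add: hermite_poly.simps(3))
    also have "\<dots> \<le> \<bar>2*x*hermite_poly (Suc k) x\<bar> + \<bar>2*real (Suc k)*hermite_poly k x\<bar>"
      by (rule abs_triangle_ineq4)
    also have "\<dots> = 2*\<bar>x\<bar>*\<bar>hermite_poly (Suc k) x\<bar> + 2*real (Suc k)*\<bar>hermite_poly k x\<bar>"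
      by (simp add: abs_mult)
    also have "\<dots> \<le> 2*\<bar>x\<bar>*(M2 * (1+\<bar>x\<bar>)^Suc k) + 2*real (Suc k)*(M1 * (1+\<bar>x\<bar>)^k)"
      by (intro add_mono mult_left_mono M1 M2) auto
    also have "\<dots> = 2*M2 * ((1+\<bar>x\<bar>)^Suc k * \<bar>x\<bar>) + 2*real (Suc k)*M1 * (1+\<bar>x\<bar>)^k" by (simp add: algebra_simps)
    also have "\<dots> \<le> 2*M2 * (1+\<bar>x\<bar>)^Suc (Suc k) + 2*real (Suc k)*M1 * (1+\<bar>x\<bar>)^Suc (Suc k)"
      using p M1p M2p by (intro add_mono mult_left_mono) auto
    finally show ?thesis by (simp add: algebra_simps)
  qed
  then show ?case using Suc by blast
qed

lemma hp_bound: "\<exists>M. \<forall>x. \<bar>hermite_poly k x\<bar> \<le> M * (1+\<bar>x\<bar>)^k"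
  using hp_bound_aux by blast

lemma normal_half: "normal_density 0 (1/sqrt 2) x = exp (- x\<^sup>2) / sqrt pi"
  by (simp add: normal_density_def power_divide)

lemma gauss_int: "(\<integral>x. exp (- x\<^sup>2) \<partial>lborel) = sqrt pi"
proof -
  have "(\<integral>x. exp (- x\<^sup>2) \<partial>lborel) = (\<integral>x. sqrt pi * normal_density 0 (1/sqrt 2) x \<partial>lborel)"
    by (simp add: normal_half)
  also have "\<dots> = sqrt pi" by simp
  finally show ?thesis .
qed

lemma gauss_moment_int: "integrable lborel (\<lambda>x::real. (1+\<bar>x\<bar>)^k * exp (- x\<^sup>2))"
proof -
  have i: "integrable lborel (\<lambda>x. 2^k * sqrt pi * (normal_density 0 (1/sqrt 2) x + normal_density 0 (1/sqrt 2) x * \<bar>x - 0\<bar>^k))"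
    by (intro integrable_mult_right Bochner_Integration.integrable_add integrable_normal_moment_abs integrable_normal_density) auto
  show ?thesis
  proof (rule Bochner_Integration.integrable_bound[OF i])
    show "AE x in lborel. norm ((1+\<bar>x\<bar>)^k * exp (- x\<^sup>2)) \<le> norm (2^k * sqrt pi * (normal_density 0 (1/sqrt 2) x + normal_density 0 (1/sqrt 2) x * \<bar>x - 0\<bar>^k))"
    proof (rule AE_I2)
      fix x :: real
      have "(1+\<bar>x\<bar>)^k \<le> (2 * max 1 \<bar>x\<bar>)^k" by (intro power_mono) auto
      also have "\<dots> = 2^k * (max 1 \<bar>x\<bar>)^k" by (simp add: power_mult_distrib)
      also have "\<dots> \<le> 2^k * (1 + \<bar>x\<bar>^k)"
      proof (rule mult_left_mono)
        show "(max 1 \<bar>x\<bar>)^k \<le> 1 + \<bar>x\<bar>^k"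
        proof (cases "\<bar>x\<bar> \<le> 1")
          case True then show ?thesis by (simp add: max_def)
        next
          case False then show ?thesis by (simp add: max_def)
        qed
      qed simp
      finally have a: "(1+\<bar>x\<bar>)^k \<le> 2^k * (1 + \<bar>x\<bar>^k)" .
      have "(1+\<bar>x\<bar>)^k * exp (- x\<^sup>2) \<le> 2^k * (1 + \<bar>x\<bar>^k) * exp (- x\<^sup>2)"
        by (rule mult_right_mono[OF a]) auto
      also have "\<dots> = 2^k * sqrt pi * (normal_density 0 (1/sqrt 2) x + normal_density 0 (1/sqrt 2) x * \<bar>x - 0\<bar>^k)"
        by (simp add: normal_half algebra_simps)
      finally show "norm ((1+\<bar>x\<bar>)^k * exp (- x\<^sup>2)) \<le> norm (2^k * sqrt pi * (normal_density 0 (1/sqrt 2) x + normal_density 0 (1/sqrt 2) x * \<bar>x - 0\<bar>^k))"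
        by (simp add: abs_mult)
    qed
  qed measurable
qed

lemma polygauss_int:
  fixes P :: "real \<Rightarrow> real"
  assumes P: "P \<in> borel_measurable borel" and b: "\<And>x. \<bar>P x\<bar> \<le> M * (1+\<bar>x\<bar>)^k"
  shows "integrable lborel (\<lambda>x. P x * exp (- x\<^sup>2))"
proof (rule Bochner_Integration.integrable_bound[OF integrable_mult_right[OF gauss_moment_int, of M k]])
  show "AE x in lborel. norm (P x * exp (- x\<^sup>2)) \<le> norm (M * ((1 + \<bar>x\<bar>) ^ k * exp (- x\<^sup>2)))"
  proof (rule AE_I2)
    fix x :: real
    have "\<bar>P x\<bar> * exp (- x\<^sup>2) \<le> M * (1+\<bar>x\<bar>)^k * exp (- x\<^sup>2)"
      by (rule mult_right_mono[OF b]) auto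
    also have "\<dots> \<le> \<bar>M * ((1 + \<bar>x\<bar>) ^ k * exp (- x\<^sup>2))\<bar>" by (simp add: mult.assoc)
    finally show "norm (P x * exp (- x\<^sup>2)) \<le> norm (M * ((1 + \<bar>x\<bar>) ^ k * exp (- x\<^sup>2)))"
      by (simp add: abs_mult)
  qed
qed (use P in measurable)

lemma polygauss_lim_top: "((\<lambda>x::real. (1+\<bar>x\<bar>)^m * exp (- x\<^sup>2)) \<longlongrightarrow> 0) at_top"
proof (rule tendsto_sandwich[of "\<lambda>x. 0" _ _ "\<lambda>x. 2^m * (x^m / exp x)"])
  show "\<forall>\<^sub>F x::real in at_top. 0 \<le> (1+\<bar>x\<bar>)^m * exp (- x\<^sup>2)" by (intro always_eventually allI mult_nonneg_nonneg zero_le_power) auto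
  show "\<forall>\<^sub>F x::real in at_top. (1+\<bar>x\<bar>)^m * exp (- x\<^sup>2) \<le> 2^m * (x^m / exp x)"
  proof (rule eventually_mono[OF eventually_ge_at_top[of 1]])
    fix x :: real assume x: "1 \<le> x"
    have a: "(1+\<bar>x\<bar>)^m \<le> (2*x)^m" using x by (intro power_mono) auto
    have "exp x \<le> exp (x\<^sup>2)" using x by (simp add: power2_eq_square)
    then have b: "exp (- x\<^sup>2) \<le> 1 / exp x" by (simp add: exp_minus field_simps)
    have "(1+\<bar>x\<bar>)^m * exp (- x\<^sup>2) \<le> (2*x)^m * (1 / exp x)"
      using a b x by (intro mult_mono) auto
    then show "(1+\<bar>x\<bar>)^m * exp (- x\<^sup>2) \<le> 2^m * (x^m / exp x)"
      by (simp add: power_mult_distrib)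
  qed
  show "((\<lambda>x::real. 2^m * (x^m / exp x)) \<longlongrightarrow> 0) at_top"
    using tendsto_mult_right_zero[OF tendsto_power_div_exp_0] by simp
qed simp

lemma polygauss_lim:
  fixes P :: "real \<Rightarrow> real"
  assumes b: "\<And>x. \<bar>P x\<bar> \<le> M * (1+\<bar>x\<bar>)^k"
  shows "((\<lambda>x. P x * exp (- x\<^sup>2)) \<longlongrightarrow> 0) at_top" "((\<lambda>x. P x * exp (- x\<^sup>2)) \<longlongrightarrow> 0) at_bot"
proof -
  have bb: "\<bar>P x * exp (- x\<^sup>2)\<bar> \<le> M * ((1+\<bar>x\<bar>)^k * exp (- x\<^sup>2))" for x
  proof -
    have "\<bar>P x\<bar> * exp (- x\<^sup>2) \<le> M * (1+\<bar>x\<bar>)^k * exp (- x\<^sup>2)"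
      by (rule mult_right_mono[OF b]) auto
    then show ?thesis by (simp add: abs_mult mult.assoc)
  qed
  have L: "((\<lambda>x. M * ((1+\<bar>x\<bar>)^k * exp (- x\<^sup>2))) \<longlongrightarrow> 0) at_top"
    using tendsto_mult_right_zero[OF polygauss_lim_top] by simp
  show "((\<lambda>x. P x * exp (- x\<^sup>2)) \<longlongrightarrow> 0) at_top"
    by (rule tendsto_0_le[OF L, of _ 1]) (auto intro!: always_eventually order_trans[OF bb abs_ge_self])
  have L2: "((\<lambda>x. M * ((1+\<bar>-x\<bar>)^k * exp (- (-x)\<^sup>2))) \<longlongrightarrow> 0) at_top"
    using L by simp
  have "((\<lambda>x. P (-x) * exp (- (-x)\<^sup>2)) \<longlongrightarrow> 0) at_top"
    by (rule tendsto_0_le[OF L2, of _ 1]) (auto intro!: always_eventually order_trans[OF bb[of "-x" for x, simplified] abs_ge_self])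
  then show "((\<lambda>x. P x * exp (- x\<^sup>2)) \<longlongrightarrow> 0) at_bot"
    by (subst filterlim_at_bot_mirror) simp
qed

lemma hp_prod_bound: "\<exists>M. \<forall>x. \<bar>hermite_poly a x * hermite_poly b x\<bar> \<le> M * (1+\<bar>x\<bar>)^(a+b)"
proof -
  obtain M1 M2 where M1: "\<And>x. \<bar>hermite_poly a x\<bar> \<le> M1 * (1+\<bar>x\<bar>)^a"
    and M2: "\<And>x. \<bar>hermite_poly b x\<bar> \<le> M2 * (1+\<bar>x\<bar>)^b" using hp_bound by blast
  have "\<bar>hermite_poly a x * hermite_poly b x\<bar> \<le> (M1*M2) * (1+\<bar>x\<bar>)^(a+b)" for x
  proof -
    have "\<bar>hermite_poly a x * hermite_poly b x\<bar> \<le> (M1 * (1+\<bar>x\<bar>)^a) * (M2 * (1+\<bar>x\<bar>)^b)"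
      unfolding abs_mult by (intro mult_mono M1 M2) (auto intro: order_trans[OF _ M1])
    then show ?thesis by (simp add: power_add algebra_simps)
  qed
  then show ?thesis by blast
qed

lemma hp_sq_int: "integrable lborel (\<lambda>x. hermite_poly a x * hermite_poly b x * exp (- x\<^sup>2))"
  using hp_prod_bound[of a b] by (auto intro!: polygauss_int)

lemma hp_norm: "(\<integral>x. (hermite_poly k x)\<^sup>2 * exp (- x\<^sup>2) \<partial>lborel) = 2^k * fact k * sqrt pi"
proof (induction k)
  case 0
  then show ?case using gauss_int by simp
next
  case (Suc k)
  let ?w = "\<lambda>x::real. exp (- x\<^sup>2)"
  let ?G = "\<lambda>x. hermite_poly k x * hermite_poly (Suc k) x * ?w x"
  let ?g = "\<lambda>x. 2 * real (Suc k) * (hermite_poly k x * hermite_poly k x * ?w x) - hermite_poly (Suc k) x * hermite_poly (Suc k) x * ?w x"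
  have der: "(?G has_real_derivative ?g x) (at x)" for x
  proof -
    have "(?G has_real_derivative
      (2*real k * hermite_poly (k-1) x) * hermite_poly (Suc k) x * ?w x + hermite_poly k x * (2*real (Suc k) * hermite_poly k x) * ?w x
      + hermite_poly k x * hermite_poly (Suc k) x * (?w x * (- (2 * x)))) (at x)"
      using hp_deriv[of k x] hp_deriv[of "Suc k" x] by (auto intro!: derivative_eq_intros simp: power2_eq_square algebra_simps)
    moreover have "(2*real k * hermite_poly (k-1) x) * hermite_poly (Suc k) x * ?w x + hermite_poly k x * (2*real (Suc k) * hermite_poly k x) * ?w x
      + hermite_poly k x * hermite_poly (Suc k) x * (?w x * (- (2 * x))) = ?g x"
      by (simp add: hp_rec[of k x] algebra_simps)
    ultimately show ?thesis by (rule DERIV_cong)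
  qed
  have gi: "integrable lborel ?g"
    by (intro Bochner_Integration.integrable_diff integrable_mult_right hp_sq_int)
  obtain M where M: "\<And>x. \<bar>hermite_poly k x * hermite_poly (Suc k) x\<bar> \<le> M * (1+\<bar>x\<bar>)^(k + Suc k)"
    using hp_prod_bound by blast
  have "(LBINT x=-\<infinity>..\<infinity>. ?g x) = 0 - 0"
  proof (rule interval_integral_FTC_integrable)
    show "(?G has_vector_derivative ?g x) (at x)" for x
      using der has_real_derivative_iff_has_vector_derivative by blast
    show "isCont ?g x" for x
      using hp_isCont by (intro continuous_intros) auto
    show "set_integrable lborel (einterval (- \<infinity>) \<infinity>) ?g"
      using gi by (simp add: set_integrable_def)
    show "((?G \<circ> real_of_ereal) \<longlongrightarrow> 0) (at_right (- \<infinity>))"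
      unfolding ereal_tendsto_simps1 using polygauss_lim(2)[OF M] by (simp add: mult.assoc)
    show "((?G \<circ> real_of_ereal) \<longlongrightarrow> 0) (at_left \<infinity>)"
      unfolding ereal_tendsto_simps1 using polygauss_lim(1)[OF M] by (simp add: mult.assoc)
  qed simp
  then have "(\<integral>x. ?g x \<partial>lborel) = 0"
    by (simp add: interval_lebesgue_integral_def set_lebesgue_integral_def)
  then have "2 * real (Suc k) * (\<integral>x. hermite_poly k x * hermite_poly k x * ?w x \<partial>lborel)
     - (\<integral>x. hermite_poly (Suc k) x * hermite_poly (Suc k) x * ?w x \<partial>lborel) = 0"
    by (subst (asm) Bochner_Integration.integral_diff) (auto intro: hp_sq_int)
  then have "(\<integral>x. hermite_poly (Suc k) x * hermite_poly (Suc k) x * ?w x \<partial>lborel) = 2 * real (Suc k) * (2^k * fact k * sqrt pi)"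
    using Suc by (simp add: power2_eq_square)
  then show ?case by (simp add: power2_eq_square algebra_simps)
qed

lemma hf_sq_int: "integrable lborel (\<lambda>x. (hermite_fun k x)\<^sup>2)"
proof -
  have "integrable lborel (\<lambda>x. hermite_poly k x * hermite_poly k x * exp (- x\<^sup>2) / (2^k * fact k * sqrt pi))"
    using hp_sq_int by (rule integrable_divide)
  moreover have "(hermite_fun k x)\<^sup>2 = hermite_poly k x * hermite_poly k x * exp (- x\<^sup>2) / (2^k * fact k * sqrt pi)" for x
    by (simp add: hermite_fun_def power_divide power_mult_distrib power2_eq_square[of "hermite_poly k x"] 
        flip: exp_add) (simp add: power2_eq_square mult_exp_exp)
  ultimately show ?thesis by simp
qed

lemma hf_norm: "(\<integral>x. (hermite_fun k x)\<^sup>2 \<partial>lborel) = 1"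
proof -
  have e: "(hermite_fun k x)\<^sup>2 = (hermite_poly k x)\<^sup>2 * exp (- x\<^sup>2) / (2^k * fact k * sqrt pi)" for x
    by (simp add: hermite_fun_def power_divide power_mult_distrib flip: exp_add) (simp add: power2_eq_square mult_exp_exp)
  show ?thesis unfolding e by (simp add: hp_norm)
qed

lemma hf_meas[measurable]: "hermite_fun k \<in> borel_measurable borel"
  unfolding hermite_fun_def by measurable


definition Cn :: "nat \<Rightarrow> (nat \<Rightarrow> nat) \<Rightarrow> real" where
  "Cn d n = 1 / mfact d n * (2 * pi) powr (- (real d / 2)) * (- 1 / 2) ^ (mabs d n)"

definition alph :: "nat \<Rightarrow> (nat \<Rightarrow> nat) \<Rightarrow> real" where
  "alph d n = real d / 2 + real (mabs d n)"

lemma mabs_double: "mabs d (\<lambda>i. 2 * n i) = 2 * mabs d n"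
  by (simp add: mabs_def sum_distrib_left)

lemma double_in: "n \<in> multi_indices d \<Longrightarrow> (\<lambda>i. 2 * n i) \<in> multi_indices d"
  by (simp add: multi_indices_def)

lemma delta_trunc_double:
  assumes "n \<in> multi_indices d" "N \<le> mabs d n"
  shows "delta_trunc d N t1 t2 (\<lambda>i. 2 * n i) x = psi d n t1 t2 x"
  using assms by (simp add: delta_trunc_def double_in mabs_double)

lemma delta_trunc_zero:
  assumes "(\<exists>i. odd (m i)) \<or> mabs d m < 2 * N"
  shows "delta_trunc d N t1 t2 m x = 0"
  using assms by (auto simp: delta_trunc_def)

lemma case_prod_app: "(\<lambda>(t1, t2). delta_trunc d N t1 t2) t m x = delta_trunc d N (fst t) (snd t) m x"
  by (cases t) simp

lemma ind_prod:
  assumes "0 < K"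
  shows "(\<Prod>k<K. indicator {t1..t2} (x k) :: real) = (if t1 \<le> kmin K x \<and> kmax K x \<le> t2 then 1 else 0)"
proof -
  have fin: "finite (x ` {..<K})" "x ` {..<K} \<noteq> {}" using assms by auto
  have "(t1 \<le> kmin K x \<and> kmax K x \<le> t2) \<longleftrightarrow> (\<forall>k<K. x k \<in> {t1..t2})"
    unfolding kmin_def kmax_def using fin by auto
  moreover have "(\<Prod>k<K. indicator {t1..t2} (x k) :: real) = (if \<forall>k<K. x k \<in> {t1..t2} then 1 else 0)"
  proof (cases "\<forall>k<K. x k \<in> {t1..t2}")
    case True then show ?thesis by (simp add: indicator_def)
  next
    case False
    then obtain k where "k < K" "x k \<notin> {t1..t2}" by blast
    then have "(\<Prod>k<K. indicator {t1..t2} (x k) :: real) = 0"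
      by (intro prod_zero) (auto simp: indicator_def intro!: bexI[of _ k])
    then show ?thesis using False by simp
  qed
  ultimately show ?thesis by simp
qed

lemma kmin_le_kmax: "0 < K \<Longrightarrow> kmin K x \<le> kmax K x"
  unfolding kmin_def kmax_def by (meson Max_ge Min_le finite_imageI finite_lessThan imageI lessThan_iff order.trans)

lemma kmin_le: "k < K \<Longrightarrow> kmin K x \<le> x k"
  unfolding kmin_def by auto

lemma kmax_ge: "k < K \<Longrightarrow> x k \<le> kmax K x"
  unfolding kmax_def by auto

lemma psi_eq:
  assumes "0 < 2 * mabs d n"
  shows "psi d n t1 t2 x = Cn d n * (t2 - t1) powr (- alph d n)
     * (if t1 \<le> kmin (2 * mabs d n) x \<and> kmax (2 * mabs d n) x \<le> t2 then 1 else 0)"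
proof -
  have e: "- (real d / 2) - real (mabs d n) = - alph d n" by (simp add: alph_def)
  show ?thesis unfolding psi_def ind_prod[OF assms] Cn_def e by (simp add: algebra_simps)
qed

lemma alph_ge: "0 < mabs d n \<Longrightarrow> 1 \<le> alph d n"
  unfolding alph_def by simp

lemma alph_gt: "1 \<le> d \<Longrightarrow> 0 < mabs d n \<Longrightarrow> 1 < alph d n"
  unfolding alph_def by simp

lemma psi_bound:
  assumes K: "0 < mabs d n" and uv: "kmin (2 * mabs d n) x < kmax (2 * mabs d n) x"
  shows "\<bar>psi d n t1 t2 x\<bar> \<le> \<bar>Cn d n\<bar> * (kmax (2 * mabs d n) x - kmin (2 * mabs d n) x) powr (- alph d n)"
proof (cases "t1 \<le> kmin (2 * mabs d n) x \<and> kmax (2 * mabs d n) x \<le> t2")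
  case True
  have "(t2 - t1) powr (- alph d n) \<le> (kmax (2 * mabs d n) x - kmin (2 * mabs d n) x) powr (- alph d n)"
    using True uv alph_ge[OF K] by (intro powr_mono2') auto
  then show ?thesis using K True
    by (simp add: psi_eq abs_mult mult_left_mono abs_of_nonneg)
next
  case False
  then show ?thesis using K by (auto simp: psi_eq)
qed

lemma psi_bound_gap:
  assumes K: "0 < mabs d n" and g: "\<Lambda> < t2 - t1" "0 < \<Lambda>"
  shows "\<bar>psi d n t1 t2 x\<bar> \<le> \<bar>Cn d n\<bar> * \<Lambda> powr (- alph d n)"
proof -
  have "(t2 - t1) powr (- alph d n) \<le> \<Lambda> powr (- alph d n)"
    using g alph_ge[OF K] by (intro powr_mono2') auto
  then show ?thesis using K by (simp add: psi_eq abs_mult mult_left_mono abs_of_nonneg)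
qed

lemma psi_zero_out:
  assumes "k < 2 * mabs d n" "x k < t1 \<or> t2 < x k"
  shows "psi d n t1 t2 x = 0"
proof -
  have "(\<Prod>k<2 * mabs d n. indicator {t1..t2} (x k) :: real) = 0"
    using assms by (intro prod_zero) (auto simp: indicator_def intro!: bexI[of _ k])
  then show ?thesis by (simp add: psi_def)
qed

lemma psi_alt: "psi d n t1 t2 x = (1 / mfact d n) * (2 * pi) powr (- (real d / 2))
     * (t2 - t1) powr (- (real d / 2) - real (mabs d n)) * (- 1 / 2) ^ (mabs d n)
     * (\<Prod>k<2 * mabs d n. if t1 \<le> x k \<and> x k \<le> t2 then 1 else 0)"
  unfolding psi_def by (intro arg_cong2[where f="(*)"] refl prod.cong) (auto simp: indicator_def)

lemma psi_meas_pair: "(\<lambda>t. psi d n (fst t) (snd t) x) \<in> borel_measurable (lborel \<Otimes>\<^sub>M lborel)"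
  unfolding psi_alt by measurable

lemma psi_meas_joint: "(\<lambda>p. psi d n (fst (snd p)) (snd (snd p)) (fst p)) \<in> borel_measurable (PiM {..<2 * mabs d n} (\<lambda>_. lborel) \<Otimes>\<^sub>M (lborel \<Otimes>\<^sub>M lborel))"
proof -
  let ?M = "PiM {..<2 * mabs d n} (\<lambda>_. lborel) \<Otimes>\<^sub>M (lborel \<Otimes>\<^sub>M lborel) :: ((nat \<Rightarrow> real) \<times> real \<times> real) measure"
  have h: "(\<lambda>p. if fst (snd p) \<le> fst p k \<and> fst p k \<le> snd (snd p) then 1 else 0::real) \<in> borel_measurable ?M"
    if "k \<in> {..<2 * mabs d n}" for k using that by measurable
  have p: "(\<lambda>p. \<Prod>k<2 * mabs d n. if fst (snd p) \<le> fst p k \<and> fst p k \<le> snd (snd p) then 1 else 0::real) \<in> borel_measurable ?M"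
    by (rule borel_measurable_prod[OF h])
  have q: "(\<lambda>p. (snd (snd p) - fst (snd p)) powr (- (real d / 2) - real (mabs d n))) \<in> borel_measurable ?M"
    by measurable
  show ?thesis unfolding psi_alt
    by (intro borel_measurable_times borel_measurable_const p q)
qed

lemma psi_meas: "(\<lambda>t. psi d n (fst t) (snd t) x) \<in> borel_measurable lborel"
  using psi_meas_pair by (simp add: lborel_prod)


lemma pred_set: "Measurable.pred (lborel \<Otimes>\<^sub>M lborel) P \<Longrightarrow> {t::real\<times>real. P t} \<in> sets lborel"
  unfolding pred_def lborel_prod by simp

lemma line_null: "{t::real\<times>real. snd t - fst t = c} \<in> null_sets lborel"
proof -
  have S: "{t::real\<times>real. snd t - fst t = c} \<in> sets (lborel \<Otimes>\<^sub>M lborel)"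
    unfolding lborel_prod by (rule pred_set) measurable
  have "emeasure (lborel \<Otimes>\<^sub>M lborel) {t::real\<times>real. snd t - fst t = c}
      = (\<integral>\<^sup>+ x. emeasure lborel (Pair x -` {t::real\<times>real. snd t - fst t = c}) \<partial>lborel)"
    by (rule lborel.emeasure_pair_measure_alt[OF S])
  also have "\<dots> = (\<integral>\<^sup>+ x. emeasure lborel {x + c} \<partial>lborel)"
    by (intro nn_integral_cong arg_cong[where f="emeasure lborel"]) auto
  also have "\<dots> = 0" by simp
  finally have "{t::real\<times>real. snd t - fst t = c} \<in> null_sets (lborel \<Otimes>\<^sub>M lborel)"
    using S by (simp add: null_sets_def)
  then show ?thesis by (simp add: lborel_prod)
qed

lemma AE_not_line: "AE t in lborel. snd t - fst t \<noteq> (c::real)"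
  using AE_not_in[OF line_null[of c]] by simp


lemma box_fin:
  assumes "A \<subseteq> {0..T} \<times> {0..T}" "A \<in> sets lborel"
  shows "emeasure lborel (A :: (real\<times>real) set) < \<infinity>"
proof -
  have "{0..T} \<times> {0..T} = cbox (0::real,0::real) (T,T)" by (auto simp: cbox_Pair_eq)
  then have "emeasure lborel ({0..T} \<times> {0..T}) < (\<infinity>::ennreal)"
    using emeasure_lborel_cbox_finite by metis
  moreover have "emeasure lborel A \<le> emeasure lborel ({0..T} \<times> {0..T} :: (real\<times>real) set)"
    using assms by (intro emeasure_mono) (auto simp: \<open>{0..T} \<times> {0..T} = cbox (0::real,0::real) (T,T)\<close>)
  ultimately show ?thesis by (meson le_less_trans)
qed

lemma set_int_bdd:
  fixes f :: "real\<times>real \<Rightarrow> real"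
  assumes f: "f \<in> borel_measurable lborel" and b: "\<And>t. \<bar>f t\<bar> \<le> c"
    and S: "S \<in> sets lborel" "emeasure lborel S < \<infinity>"
  shows "set_integrable lborel S f"
proof (rule set_integrable_bound[where f="\<lambda>_. c"])
  show "set_integrable lborel S (\<lambda>_. c)"
    unfolding set_integrable_def using S by (intro integrable_scaleR_left integrable_real_indicator) auto
  show "set_borel_measurable lborel S f" using f S unfolding set_borel_measurable_def by measurable
  show "AE x in lborel. x \<in> S \<longrightarrow> norm (f x) \<le> norm c"
    using b by (auto intro!: AE_I2 order_trans[OF _ abs_ge_self])
qed


lemma cp_set: "{(t1, t2). P t1 t2} = {t. P (fst t) (snd t)}" by auto

lemma SILT_double:
  assumes "n \<in> multi_indices d" "N \<le> mabs d n"
  shows "SILT d N T (\<lambda>i. 2 * n i) x = (LINT t:{(t1, t2). 0 < t1 \<and> t1 < t2 \<and> t2 < T}|lborel. psi d n (fst t) (snd t) x)"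
    and "SILT_gap d N T \<Lambda> (\<lambda>i. 2 * n i) x = (LINT t:{(t1, t2). 0 < t1 \<and> t1 < t2 \<and> t2 < T \<and> t2 - t1 > \<Lambda>}|lborel. psi d n (fst t) (snd t) x)"
  unfolding SILT_def SILT_gap_def hida_integral_def case_prod_app delta_trunc_double[OF assms] by simp_all

lemma SILT_zero:
  assumes "(\<exists>i. odd (m i)) \<or> mabs d m < 2 * N"
  shows "SILT d N T m x = 0" "SILT_gap d N T \<Lambda> m x = 0"
  unfolding SILT_def SILT_gap_def hida_integral_def case_prod_app delta_trunc_zero[OF assms] by simp_all

lemma part3:
  assumes n: "n \<in> multi_indices d" "N \<le> mabs d n" "1 \<le> N" and L: "0 < \<Lambda>"
    and uv: "kmin (2 * mabs d n) x < kmax (2 * mabs d n) x"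
  shows "SILT d N T (\<lambda>i. 2 * n i) x = SILT_gap d N T \<Lambda> (\<lambda>i. 2 * n i) x
     + Theta (\<Lambda> - (kmax (2 * mabs d n) x - kmin (2 * mabs d n) x)) * rho d T \<Lambda> n x"
proof -
  let ?K = "2 * mabs d n"
  define u where "u = kmin ?K x"
  define v where "v = kmax ?K x"
  define f where "f = (\<lambda>t. psi d n (fst t) (snd t) x)"
  have K: "0 < mabs d n" using n by auto
  have uv': "u < v" using uv by (simp add: u_def v_def)
  define A where "A = {t::real\<times>real. 0 < fst t \<and> fst t < snd t \<and> snd t < T}"
  define G where "G = {t::real\<times>real. 0 < fst t \<and> fst t < snd t \<and> snd t < T \<and> snd t - fst t > \<Lambda>}"
  define D where "D = {t::real\<times>real. 0 < fst t \<and> fst t \<le> u \<and> v \<le> snd t \<and> snd t < T \<and> snd t - fst t < \<Lambda>}"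
  have fm: "f \<in> borel_measurable lborel" unfolding f_def by (rule psi_meas)
  have fb: "\<bar>f t\<bar> \<le> \<bar>Cn d n\<bar> * (v - u) powr (- alph d n)" for t
    unfolding f_def u_def v_def by (rule psi_bound[OF K uv])
  have fE: "f t = (if fst t \<le> u \<and> v \<le> snd t then f t else 0)" for t
    unfolding f_def u_def v_def using K by (simp add: psi_eq)
  have As: "A \<in> sets lborel" unfolding A_def by (rule pred_set) measurable
  have Gs: "G \<in> sets lborel" unfolding G_def by (rule pred_set) measurable
  have Ds: "D \<in> sets lborel" unfolding D_def by (rule pred_set) measurable
  have Afin: "emeasure lborel A < \<infinity>" using As by (intro box_fin[of _ T]) (auto simp: A_def)
  have intA: "set_integrable lborel A f" by (rule set_int_bdd[OF fm fb As Afin])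
  have intG: "set_integrable lborel G f" by (rule set_integrable_subset[OF intA Gs]) (auto simp: A_def G_def)
  have intAG: "set_integrable lborel (A - G) f" by (rule set_integrable_subset[OF intA]) (use As Gs in auto)
  have "(LINT t:A|lborel. f t) = (LINT t:G \<union> (A - G)|lborel. f t)"
    by (rule arg_cong[where f="\<lambda>S. LINT t:S|lborel. f t"]) (auto simp: A_def G_def)
  also have "\<dots> = (LINT t:G|lborel. f t) + (LINT t:A - G|lborel. f t)"
    by (rule set_integral_Un[OF _ intG intAG]) auto
  finally have split: "(LINT t:A|lborel. f t) = (LINT t:G|lborel. f t) + (LINT t:A - G|lborel. f t)" .
  have rest: "(LINT t:A - G|lborel. f t) = Theta (\<Lambda> - (v - u)) * (LINT t:D|lborel. f t)"
  proof (cases "v - u < \<Lambda>")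
    case True
    have "(LINT t:A - G|lborel. f t) = (LINT t:D|lborel. f t)"
      unfolding set_lebesgue_integral_def
    proof (rule integral_cong_AE)
      show "(\<lambda>t. indicator (A - G) t *\<^sub>R f t) \<in> borel_measurable lborel" using fm As Gs by measurable
      show "(\<lambda>t. indicator D t *\<^sub>R f t) \<in> borel_measurable lborel" using fm Ds by measurable
      show "AE t in lborel. indicator (A - G) t *\<^sub>R f t = indicator D t *\<^sub>R f t"
        using AE_not_line[of \<Lambda>]
      proof (rule eventually_mono)
        fix t :: "real \<times> real" assume l: "snd t - fst t \<noteq> \<Lambda>"
        show "indicator (A - G) t *\<^sub>R f t = indicator D t *\<^sub>R f t"
        proof (cases "fst t \<le> u \<and> v \<le> snd t")
          case True
          then have "t \<in> A - G \<longleftrightarrow> t \<in> D" using l uv' by (auto simp: A_def G_def D_def)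
          then show ?thesis by (simp add: indicator_def)
        next
          case False
          then have "f t = 0" using fE[of t] by auto
          then show ?thesis by simp
        qed
      qed
    qed
    then show ?thesis using True by (simp add: Theta_def)
  next
    case False
    have "(LINT t:A - G|lborel. f t) = (LINT t:A - G|lborel. 0)"
      unfolding set_lebesgue_integral_def
    proof (rule integral_cong_AE)
      show "(\<lambda>t. indicator (A - G) t *\<^sub>R f t) \<in> borel_measurable lborel" using fm As Gs by measurable
      show "(\<lambda>t. indicator (A - G) t *\<^sub>R (0::real)) \<in> borel_measurable lborel" by simp
      show "AE t in lborel. indicator (A - G) t *\<^sub>R f t = indicator (A - G) t *\<^sub>R (0::real)"
        using AE_not_line[of \<Lambda>]
      proof (rule eventually_mono)
        fix t :: "real \<times> real" assume l: "snd t - fst t \<noteq> \<Lambda>"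
        show "indicator (A - G) t *\<^sub>R f t = indicator (A - G) t *\<^sub>R (0::real)"
        proof (cases "fst t \<le> u \<and> v \<le> snd t")
          case True
          then have "t \<notin> A - G" using l False by (auto simp: A_def G_def)
          then show ?thesis by (simp add: indicator_def)
        next
          case False
          then have "f t = 0" using fE[of t] by auto
          then show ?thesis by simp
        qed
      qed
    qed
    then show ?thesis using False by (simp add: Theta_def)
  qed
  have eA: "SILT d N T (\<lambda>i. 2 * n i) x = (LINT t:A|lborel. f t)"
    unfolding SILT_double[OF n(1,2)] A_def f_def cp_set ..
  have eG: "SILT_gap d N T \<Lambda> (\<lambda>i. 2 * n i) x = (LINT t:G|lborel. f t)"
    unfolding SILT_double[OF n(1,2)] G_def f_def cp_set ..
  have eD: "rho d T \<Lambda> n x = (LINT t:D|lborel. f t)"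
    unfolding rho_def D_def f_def cp_set u_def v_def ..
  show ?thesis unfolding eA eG eD split rest u_def v_def ..
qed


lemma ftc_Icc:
  fixes f F :: "real \<Rightarrow> real"
  assumes ab: "a \<le> b" and F: "\<And>s. a \<le> s \<Longrightarrow> s \<le> b \<Longrightarrow> (F has_real_derivative f s) (at s)"
    and c: "continuous_on {a..b} f"
  shows "(LINT s:{a..b}|lborel. f s) = F b - F a"
proof -
  have "(LBINT s=a..b. f s) = F b - F a"
    using ab c F by (intro interval_integral_FTC_finite)
      (auto simp: min_def max_def has_real_derivative_iff_has_vector_derivative[symmetric]
        intro: has_field_derivative_at_within)
  then show ?thesis using interval_integral_Icc[OF ab, of f] by simp
qed

lemma set_int_Ico:
  fixes f :: "real \<Rightarrow> real"
  assumes "f \<in> borel_measurable lborel"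
  shows "(LINT s:{a..<b}|lborel. f s) = (LINT s:{a..b}|lborel. f s)"
    "(LINT s:{a<..b}|lborel. f s) = (LINT s:{a..b}|lborel. f s)"
proof -
  show "(LINT s:{a..<b}|lborel. f s) = (LINT s:{a..b}|lborel. f s)"
    using assms by (intro set_integral_cong_set)
      (auto simp: set_borel_measurable_def intro!: eventually_mono[OF AE_lborel_singleton[of b]])
  show "(LINT s:{a<..b}|lborel. f s) = (LINT s:{a..b}|lborel. f s)"
    using assms by (intro set_integral_cong_set)
      (auto simp: set_borel_measurable_def intro!: eventually_mono[OF AE_lborel_singleton[of a]])
qed

lemma I1:
  fixes \<alpha> :: real
  assumes "c < a" "a \<le> b" "\<alpha> \<noteq> 1"
  shows "(LINT s:{a..<b}|lborel. (s - c) powr (- \<alpha>)) = ((b - c) powr (1 - \<alpha>) - (a - c) powr (1 - \<alpha>)) / (1 - \<alpha>)"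
proof -
  have "(LINT s:{a..b}|lborel. (s - c) powr (- \<alpha>)) = (b - c) powr (1 - \<alpha>) / (1 - \<alpha>) - (a - c) powr (1 - \<alpha>) / (1 - \<alpha>)"
  proof (rule ftc_Icc[OF assms(2)])
    fix s assume s: "a \<le> s" "s \<le> b"
    then have sc: "0 < s - c" using assms by simp
    show "((\<lambda>s. (s - c) powr (1 - \<alpha>) / (1 - \<alpha>)) has_real_derivative (s - c) powr (- \<alpha>)) (at s)"
    proof -
      have "((\<lambda>s. (s - c) powr (1 - \<alpha>)) has_real_derivative (1 - \<alpha>) * (s - c) powr (1 - \<alpha> - 1) * (1 - 0)) (at s)"
        using sc by (intro derivative_intros) auto
      then have "((\<lambda>s. (s - c) powr (1 - \<alpha>) / (1 - \<alpha>)) has_real_derivative (1 - \<alpha>) * (s - c) powr (1 - \<alpha> - 1) * (1 - 0) / (1 - \<alpha>)) (at s)"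
        by (rule DERIV_cdivide)
      moreover have "(1 - \<alpha>) * (s - c) powr (1 - \<alpha> - 1) * (1 - 0) / (1 - \<alpha>) = (s - c) powr (- \<alpha>)"
        using assms(3) by simp
      ultimately show ?thesis by simp
    qed
  next
    show "continuous_on {a..b} (\<lambda>s. (s - c) powr (- \<alpha>))"
      using assms by (intro continuous_intros) auto
  qed
  moreover have "(\<lambda>s. (s - c) powr (- \<alpha>)) \<in> borel_measurable lborel" by measurable
  ultimately show ?thesis by (simp add: set_int_Ico diff_divide_distrib)
qed


lemma I2a:
  fixes \<alpha> L :: real
  assumes "a \<le> b" "b < v" "\<alpha> \<noteq> 2"
  shows "(LINT s:{a..b}|lborel. L powr (1 - \<alpha>) - (v - s) powr (1 - \<alpha>))
    = L powr (1 - \<alpha>) * (b - a) + ((v - b) powr (2 - \<alpha>) - (v - a) powr (2 - \<alpha>)) / (2 - \<alpha>)"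
proof -
  have "(LINT s:{a..b}|lborel. L powr (1 - \<alpha>) - (v - s) powr (1 - \<alpha>))
     = (L powr (1 - \<alpha>) * b + (v - b) powr (2 - \<alpha>) / (2 - \<alpha>)) - (L powr (1 - \<alpha>) * a + (v - a) powr (2 - \<alpha>) / (2 - \<alpha>))"
  proof (rule ftc_Icc[OF assms(1)])
    fix s assume s: "a \<le> s" "s \<le> b"
    then have sc: "0 < v - s" using assms by simp
    have "((\<lambda>s. (v - s) powr (2 - \<alpha>)) has_real_derivative (2 - \<alpha>) * (v - s) powr (2 - \<alpha> - 1) * (0 - 1)) (at s)"
      using sc by (intro derivative_intros) auto
    then have "((\<lambda>s. L powr (1 - \<alpha>) * s + (v - s) powr (2 - \<alpha>) / (2 - \<alpha>)) has_real_derivative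
        L powr (1 - \<alpha>) * 1 + (2 - \<alpha>) * (v - s) powr (2 - \<alpha> - 1) * (0 - 1) / (2 - \<alpha>)) (at s)"
      by (intro DERIV_add DERIV_cmult DERIV_cdivide DERIV_ident)
    moreover have "L powr (1 - \<alpha>) * 1 + (2 - \<alpha>) * (v - s) powr (2 - \<alpha> - 1) * (0 - 1) / (2 - \<alpha>)
       = L powr (1 - \<alpha>) - (v - s) powr (1 - \<alpha>)"
      using assms(3) by (simp add: diff_diff_eq[symmetric])
    ultimately show "((\<lambda>s. L powr (1 - \<alpha>) * s + (v - s) powr (2 - \<alpha>) / (2 - \<alpha>)) has_real_derivative
        L powr (1 - \<alpha>) - (v - s) powr (1 - \<alpha>)) (at s)" by simp
  next
    show "continuous_on {a..b} (\<lambda>s. L powr (1 - \<alpha>) - (v - s) powr (1 - \<alpha>))"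
      using assms by (intro continuous_intros) auto
  qed
  then show ?thesis by (simp add: algebra_simps diff_divide_distrib)
qed

lemma I2b:
  fixes M :: real
  assumes "a \<le> b" "b < v"
  shows "(LINT s:{a..b}|lborel. M - (v - s) powr (1 - 2))
    = M * (b - a) + (ln (v - b) - ln (v - a))"
proof -
  have "(LINT s:{a..b}|lborel. M - (v - s) powr (1 - 2))
     = (M * b + ln (v - b)) - (M * a + ln (v - a))"
  proof (rule ftc_Icc[OF assms(1)])
    fix s assume s: "a \<le> s" "s \<le> b"
    then have sc: "0 < v - s" using assms by simp
    have "((\<lambda>s. M * s + ln (v - s)) has_real_derivative M * 1 + (0 - 1) / (v - s)) (at s)"
      using sc by (auto intro!: derivative_eq_intros)
    moreover have "M * 1 + (0 - 1) / (v - s) = M - (v - s) powr (1 - 2)"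
      using sc by (simp add: powr_minus_divide powr_minus)
    ultimately show "((\<lambda>s. M * s + ln (v - s)) has_real_derivative M - (v - s) powr (1 - 2)) (at s)" by simp
  next
    show "continuous_on {a..b} (\<lambda>s. M - (v - s) powr (1 - 2))"
      using assms by (intro continuous_intros) auto
  qed
  then show ?thesis by (simp add: algebra_simps)
qed

lemma rho_calc:
  assumes K: "0 < mabs d n" and a1: "alph d n \<noteq> 1"
    and c: "\<Lambda> < kmax (2 * mabs d n) x" "kmin (2 * mabs d n) x < T - \<Lambda>"
       "kmin (2 * mabs d n) x < kmax (2 * mabs d n) x"
       "kmax (2 * mabs d n) x - kmin (2 * mabs d n) x < \<Lambda>"
  shows "rho d T \<Lambda> n x = Cn d n * (LINT s:{kmax (2 * mabs d n) x - \<Lambda>..kmin (2 * mabs d n) x}|lborel.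
      (\<Lambda> powr (1 - alph d n) - (kmax (2 * mabs d n) x - s) powr (1 - alph d n)) / (1 - alph d n))"
proof -
  define u where "u = kmin (2 * mabs d n) x"
  define v where "v = kmax (2 * mabs d n) x"
  define \<alpha> where "\<alpha> = alph d n"
  define f where "f = (\<lambda>t. psi d n (fst t) (snd t) x)"
  define D where "D = {t::real\<times>real. 0 < fst t \<and> fst t \<le> u \<and> v \<le> snd t \<and> snd t < T \<and> snd t - fst t < \<Lambda>}"
  define \<phi> where "\<phi> = (\<lambda>s. (\<Lambda> powr (1 - \<alpha>) - (v - s) powr (1 - \<alpha>)) / (1 - \<alpha>))"
  have uv: "u < v" "\<Lambda> < v" "u < T - \<Lambda>" "v - u < \<Lambda>" using c by (auto simp: u_def v_def)
  have fm: "f \<in> borel_measurable lborel" unfolding f_def by (rule psi_meas)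
  have fb: "\<bar>f t\<bar> \<le> \<bar>Cn d n\<bar> * (v - u) powr (- alph d n)" for t
    unfolding f_def u_def v_def by (rule psi_bound[OF K c(3)])
  have feq: "f t = Cn d n * (snd t - fst t) powr (- \<alpha>) * (if fst t \<le> u \<and> v \<le> snd t then 1 else 0)" for t
    unfolding f_def u_def v_def \<alpha>_def using K by (simp add: psi_eq)
  have Ds: "D \<in> sets lborel" unfolding D_def by (rule pred_set) measurable
  have Dfin: "emeasure lborel D < \<infinity>" using Ds uv by (intro box_fin[of _ T]) (auto simp: D_def)
  have intD: "set_integrable lborel D f" by (rule set_int_bdd[OF fm fb Ds Dfin])
  then have intD2: "integrable (lborel \<Otimes>\<^sub>M lborel) (\<lambda>t. indicator D t *\<^sub>R f t)"
    by (simp add: set_integrable_def lborel_prod)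
  have eD: "rho d T \<Lambda> n x = (LINT t:D|lborel. f t)"
    unfolding rho_def D_def f_def cp_set u_def v_def ..
  also have "\<dots> = (\<integral>t. indicator D t *\<^sub>R f t \<partial>(lborel \<Otimes>\<^sub>M lborel))"
    by (simp add: set_lebesgue_integral_def lborel_prod)
  also have "\<dots> = (\<integral>t1. (\<integral>t2. indicator D (t1, t2) *\<^sub>R f (t1, t2) \<partial>lborel) \<partial>lborel)"
    by (rule lborel_pair.integral_fst'[OF intD2, symmetric])
  also have "\<dots> = (\<integral>t1. indicator {v - \<Lambda><..u} t1 * (Cn d n * \<phi> t1) \<partial>lborel)"
  proof (rule Bochner_Integration.integral_cong[OF refl])
    fix t1 :: real
    show "(\<integral>t2. indicator D (t1, t2) *\<^sub>R f (t1, t2) \<partial>lborel) = indicator {v - \<Lambda><..u} t1 * (Cn d n * \<phi> t1)"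
    proof (cases "v - \<Lambda> < t1 \<and> t1 \<le> u")
      case True
      have pw: "indicator D (t1, t2) * f (t1, t2) = Cn d n * (indicator {v..<t1 + \<Lambda>} t2 * (t2 - t1) powr (- \<alpha>))" for t2
      proof (cases "v \<le> t2 \<and> t2 < t1 + \<Lambda>")
        case True2: True
        then have "(t1, t2) \<in> D" using True uv by (auto simp: D_def)
        then show ?thesis using True True2 by (simp add: feq indicator_def)
      next
        case False
        then have "(t1, t2) \<notin> D" by (auto simp: D_def)
        then show ?thesis using False by (simp add: indicator_def)
      qed
      have "(\<integral>t2. indicator D (t1, t2) *\<^sub>R f (t1, t2) \<partial>lborel) = (\<integral>t2. Cn d n * (indicator {v..<t1 + \<Lambda>} t2 * (t2 - t1) powr (- \<alpha>)) \<partial>lborel)"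
        using pw by simp
      also have "\<dots> = Cn d n * (LINT t2:{v..<t1 + \<Lambda>}|lborel. (t2 - t1) powr (- \<alpha>))"
        by (simp add: set_lebesgue_integral_def)
      also have "\<dots> = Cn d n * (((t1 + \<Lambda> - t1) powr (1 - \<alpha>) - (v - t1) powr (1 - \<alpha>)) / (1 - \<alpha>))"
        using True uv a1 by (subst I1) (auto simp: \<alpha>_def)
      finally show ?thesis using True by (simp add: \<phi>_def)
    next
      case False
      have z: "indicator D (t1, t2) * f (t1, t2) = 0" for t2
      proof -
        have "(t1, t2) \<notin> D \<or> f (t1, t2) = 0"
        proof (cases "(t1, t2) \<in> D")
          case True
          then show ?thesis using False by (auto simp: D_def)
        qed simp
        then show ?thesis by auto
      qed
      show ?thesis using False by (simp add: z)
    qed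
  qed
  also have "\<dots> = Cn d n * (LINT s:{v - \<Lambda><..u}|lborel. \<phi> s)"
    by (simp add: set_lebesgue_integral_def mult.left_commute)
  also have "\<dots> = Cn d n * (LINT s:{v - \<Lambda>..u}|lborel. \<phi> s)"
    by (subst set_int_Ico(2)) (auto simp: \<phi>_def)
  finally show ?thesis by (simp add: u_def v_def \<phi>_def \<alpha>_def)
qed


lemma alg4a:
  fixes C P Q R a b \<alpha> :: real
  assumes "\<alpha> \<noteq> 1" "\<alpha> \<noteq> 2"
  shows "C * ((P * b + (Q - R) / (2 - \<alpha>)) / (1 - \<alpha>)) = C * (1 / (\<alpha> - 1)) * ((Q - R) / (\<alpha> - 2) + (- b) * P)"
proof -
  have "1 - \<alpha> \<noteq> 0" "2 - \<alpha> \<noteq> 0" "\<alpha> - 1 \<noteq> 0" "\<alpha> - 2 \<noteq> 0" using assms by auto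
  then show ?thesis by (simp add: field_simps)
qed

lemma part4a:
  assumes K: "0 < mabs d n" and d: "1 \<le> d" and a2: "real d / 2 + real (mabs d n) \<noteq> 2"
    and c: "\<Lambda> < kmax (2 * mabs d n) x" "kmin (2 * mabs d n) x < T - \<Lambda>"
       "kmin (2 * mabs d n) x < kmax (2 * mabs d n) x"
       "kmax (2 * mabs d n) x - kmin (2 * mabs d n) x < \<Lambda>"
  shows "rho d T \<Lambda> n x =
                  (2 * pi) powr (- (real d / 2)) / mfact d n * (- 1 / 2) ^ (mabs d n)
                  * (1 / (real d / 2 + real (mabs d n) - 1))
                  * (((kmax (2 * mabs d n) x - kmin (2 * mabs d n) x)
                        powr (- (real d / 2) - real (mabs d n) + 2)
                      - \<Lambda> powr (- (real d / 2) - real (mabs d n) + 2))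
                       / (real d / 2 + real (mabs d n) - 2)
                     + (kmax (2 * mabs d n) x - kmin (2 * mabs d n) x - \<Lambda>)
                       * \<Lambda> powr (- (real d / 2) - real (mabs d n) + 1))"
proof -
  define u where "u = kmin (2 * mabs d n) x"
  define v where "v = kmax (2 * mabs d n) x"
  define \<alpha> where "\<alpha> = alph d n"
  have a1: "\<alpha> \<noteq> 1" using alph_gt[OF d K] by (simp add: \<alpha>_def)
  have a2': "\<alpha> \<noteq> 2" using a2 by (simp add: \<alpha>_def alph_def)
  have uv: "u < v" "v - u < \<Lambda>" using c by (auto simp: u_def v_def)
  have "rho d T \<Lambda> n x = Cn d n * (LINT s:{v - \<Lambda>..u}|lborel. (\<Lambda> powr (1 - \<alpha>) - (v - s) powr (1 - \<alpha>)) / (1 - \<alpha>))"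
    using rho_calc[OF K _ c] a1 by (simp add: u_def v_def \<alpha>_def)
  also have "\<dots> = Cn d n * ((LINT s:{v - \<Lambda>..u}|lborel. \<Lambda> powr (1 - \<alpha>) - (v - s) powr (1 - \<alpha>)) / (1 - \<alpha>))"
    by (simp add: set_lebesgue_integral_def)
  also have "\<dots> = Cn d n * ((\<Lambda> powr (1 - \<alpha>) * (u - (v - \<Lambda>)) + ((v - u) powr (2 - \<alpha>) - \<Lambda> powr (2 - \<alpha>)) / (2 - \<alpha>)) / (1 - \<alpha>))"
    using uv a2' by (subst I2a) auto
  also have "\<dots> = Cn d n * (1 / (\<alpha> - 1)) * (((v - u) powr (2 - \<alpha>) - \<Lambda> powr (2 - \<alpha>)) / (\<alpha> - 2) + (- (u - (v - \<Lambda>))) * \<Lambda> powr (1 - \<alpha>))"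
    by (rule alg4a[OF a1 a2'])
  finally have r: "rho d T \<Lambda> n x = Cn d n * (1 / (\<alpha> - 1)) * (((v - u) powr (2 - \<alpha>) - \<Lambda> powr (2 - \<alpha>)) / (\<alpha> - 2) + (- (u - (v - \<Lambda>))) * \<Lambda> powr (1 - \<alpha>))" .
  have e1: "- (real d / 2) - real (mabs d n) + 2 = 2 - \<alpha>" "- (real d / 2) - real (mabs d n) + 1 = 1 - \<alpha>"
     "real d / 2 + real (mabs d n) - 1 = \<alpha> - 1" "real d / 2 + real (mabs d n) - 2 = \<alpha> - 2"
    by (simp_all add: \<alpha>_def alph_def)
  have e2: "- (u - (v - \<Lambda>)) = v - u - \<Lambda>" by simp
  show ?thesis unfolding e1 u_def[symmetric] v_def[symmetric] r e2 by (simp add: Cn_def)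
qed

lemma part4b:
  assumes K: "mabs d n = 1" and d: "d = 2"
    and c: "\<Lambda> < kmax (2 * mabs d n) x" "kmin (2 * mabs d n) x < T - \<Lambda>"
       "kmin (2 * mabs d n) x < kmax (2 * mabs d n) x"
       "kmax (2 * mabs d n) x - kmin (2 * mabs d n) x < \<Lambda>"
    and n: "n \<in> multi_indices d"
  shows "rho d T \<Lambda> n x =
                  1 / (4 * pi) * (ln (kmax (2 * mabs d n) x - kmin (2 * mabs d n) x) - ln \<Lambda>
                     + (\<Lambda> - kmax (2 * mabs d n) x + kmin (2 * mabs d n) x) / \<Lambda>)"
proof -
  define u where "u = kmin (2 * mabs d n) x"
  define v where "v = kmax (2 * mabs d n) x"
  define \<alpha> where "\<alpha> = alph d n"
  have al: "\<alpha> = 2" using K d by (simp add: alph_def \<alpha>_def)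
  have uv: "u < v" "v - u < \<Lambda>" using c by (auto simp: u_def v_def)
  have mf: "mfact d n = 1"
  proof -
    have "n 0 + n 1 = 1" using K d by (simp add: mabs_def numeral_2_eq_2)
    then have "n 0 \<le> 1" "n 1 \<le> 1" by auto
    then have "fact (n 0) = (1::real)" "fact (n 1) = (1::real)"
      by (auto simp: le_Suc_eq)
    then show ?thesis using d by (simp add: mfact_def numeral_2_eq_2)
  qed
  have pw: "(2 * pi) powr (- (real d / 2)) = 1 / (2 * pi)" using d by (simp add: powr_minus_divide)
  have C: "Cn d n = - 1 / (4 * pi)"
    unfolding Cn_def pw mf K by simp
  have r0: "rho d T \<Lambda> n x = Cn d n * (LINT s:{v - \<Lambda>..u}|lborel. (\<Lambda> powr (1 - \<alpha>) - (v - s) powr (1 - \<alpha>)) / (1 - \<alpha>))"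
    unfolding u_def v_def \<alpha>_def by (rule rho_calc) (use K c al \<alpha>_def in auto)
  have r1: "(LINT s:{v - \<Lambda>..u}|lborel. (\<Lambda> powr (1 - \<alpha>) - (v - s) powr (1 - \<alpha>)) / (1 - \<alpha>))
     = (LINT s:{v - \<Lambda>..u}|lborel. \<Lambda> powr (1 - \<alpha>) - (v - s) powr (1 - \<alpha>)) / (1 - \<alpha>)"
    by (simp add: set_lebesgue_integral_def)
  have r2: "(LINT s:{v - \<Lambda>..u}|lborel. \<Lambda> powr (1 - \<alpha>) - (v - s) powr (1 - \<alpha>))
     = \<Lambda> powr (1 - \<alpha>) * (u - (v - \<Lambda>)) + (ln (v - u) - ln (v - (v - \<Lambda>)))"
    unfolding al by (rule I2b) (use uv in auto)
  have L: "\<Lambda> powr (1 - \<alpha>) = 1 / \<Lambda>" using uv al by (simp add: powr_minus_divide)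
  have "rho d T \<Lambda> n x = - 1 / (4 * pi) * ((1 / \<Lambda> * (u - (v - \<Lambda>)) + (ln (v - u) - ln \<Lambda>)) / (1 - 2))"
  proof -
    have "rho d T \<Lambda> n x = Cn d n * ((\<Lambda> powr (1 - \<alpha>) * (u - (v - \<Lambda>)) + (ln (v - u) - ln (v - (v - \<Lambda>)))) / (1 - \<alpha>))"
      by (simp only: r0 r1 r2)
    then show ?thesis unfolding C L al using uv by simp
  qed
  also have "\<dots> = 1 / (4 * pi) * (ln (v - u) - ln \<Lambda> + (\<Lambda> - v + u) / \<Lambda>)"
    using uv by (simp add: field_simps)
  finally show ?thesis unfolding u_def v_def .
qed


lemma PiE_prod_nn:
  fixes f :: "nat \<Rightarrow> ennreal"
  shows "(\<integral>\<^sup>+ \<kappa>. (\<Prod>j<K. f (\<kappa> j)) \<partial>count_space (PiE {..<K} (\<lambda>_. UNIV::nat set)))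
     = (\<integral>\<^sup>+ k. f k \<partial>count_space UNIV) ^ K"
proof -
  interpret product_sigma_finite "\<lambda>_::nat. count_space (UNIV::nat set)"
    by (intro product_sigma_finite.intro sigma_finite_measure_count_space_countable) simp
  have "count_space (PiE {..<K} (\<lambda>_. UNIV::nat set)) = PiM {..<K} (\<lambda>_. count_space UNIV)"
    by (rule count_space_PiM_finite[symmetric]) auto
  then have "(\<integral>\<^sup>+ \<kappa>. (\<Prod>j<K. f (\<kappa> j)) \<partial>count_space (PiE {..<K} (\<lambda>_. UNIV::nat set)))
     = (\<integral>\<^sup>+ \<kappa>. (\<Prod>j\<in>{..<K}. f (\<kappa> j)) \<partial>PiM {..<K} (\<lambda>_. count_space UNIV))" by simp
  also have "\<dots> = (\<Prod>j\<in>{..<K}. \<integral>\<^sup>+ k. f k \<partial>count_space UNIV)"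
    by (rule product_nn_integral_prod) auto
  finally show ?thesis by simp
qed

lemma multi_prod_nn:
  fixes f :: "nat \<Rightarrow> ennreal"
  shows "(\<integral>\<^sup>+ m. (\<Prod>i<d. f (m i)) \<partial>count_space (multi_indices d))
     = (\<integral>\<^sup>+ k. f k \<partial>count_space UNIV) ^ d"
proof -
  have b: "bij_betw (\<lambda>\<kappa> i. if i < d then \<kappa> i else 0) (PiE {..<d} (\<lambda>_. UNIV::nat set)) (multi_indices d)"
  proof (rule bij_betwI[where g="\<lambda>m. restrict m {..<d}"])
    show "(\<lambda>\<kappa> i. if i < d then \<kappa> i else 0) \<in> PiE {..<d} (\<lambda>_. UNIV) \<rightarrow> multi_indices d"
      by (auto simp: multi_indices_def)
    show "(\<lambda>m. restrict m {..<d}) \<in> multi_indices d \<rightarrow> PiE {..<d} (\<lambda>_. UNIV::nat set)"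
      by auto
    show "restrict (\<lambda>i. if i < d then \<kappa> i else 0) {..<d} = \<kappa>" if "\<kappa> \<in> PiE {..<d} (\<lambda>_. UNIV::nat set)" for \<kappa>
      using that by (auto simp: restrict_def fun_eq_iff PiE_def extensional_def)
    show "(\<lambda>i. if i < d then restrict m {..<d} i else 0) = m" if "m \<in> multi_indices d" for m
      using that by (auto simp: multi_indices_def fun_eq_iff)
  qed
  have "(\<integral>\<^sup>+ m. (\<Prod>i<d. f (m i)) \<partial>count_space (multi_indices d))
     = (\<integral>\<^sup>+ \<kappa>. (\<Prod>i<d. f ((\<lambda>\<kappa> i. if i < d then \<kappa> i else 0) \<kappa> i)) \<partial>count_space (PiE {..<d} (\<lambda>_. UNIV::nat set)))"
    by (rule nn_integral_bij_count_space[OF b, symmetric])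
  also have "\<dots> = (\<integral>\<^sup>+ \<kappa>. (\<Prod>i<d. f (\<kappa> i)) \<partial>count_space (PiE {..<d} (\<lambda>_. UNIV::nat set)))"
    by (intro nn_integral_cong prod.cong) auto
  finally show ?thesis using PiE_prod_nn by simp
qed

lemma geom_nn: "(\<integral>\<^sup>+ k. ennreal ((1/2::real) ^ k) \<partial>count_space UNIV) = 2"
proof -
  have "(\<integral>\<^sup>+ k. ennreal ((1/2::real) ^ k) \<partial>count_space UNIV) = (\<Sum>k. ennreal ((1/2::real) ^ k))"
    by (rule nn_integral_count_space_nat)
  also have "\<dots> = ennreal (\<Sum>k. (1/2::real) ^ k)"
    by (rule suminf_ennreal2) (auto intro: summable_geometric)
  also have "(\<Sum>k. (1/2::real) ^ k) = 2" using suminf_geometric[of "1/2::real"] by simp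
  finally show ?thesis by simp
qed

lemma fact_double: "fact (2 * a) \<le> (4::real) ^ a * (fact a)\<^sup>2"
proof (induction a)
  case 0 then show ?case by simp
next
  case (Suc a)
  have "fact (2 * Suc a) = (real (2 * a) + 2) * (real (2*a) + 1) * (fact (2 * a) :: real)"
    by (simp add: fact_Suc algebra_simps)
  also have "\<dots> \<le> (4 * (real a + 1)^2) * (4 ^ a * (fact a)\<^sup>2)"
  proof (rule mult_mono[OF _ Suc])
    show "(real (2 * a) + 2) * (real (2 * a) + 1) \<le> 4 * (real a + 1)\<^sup>2"
      by (simp add: power2_eq_square algebra_simps)
  qed auto
  also have "\<dots> = 4 ^ Suc a * (fact (Suc a))\<^sup>2" by (simp add: fact_Suc power2_eq_square algebra_simps)
  finally show ?case .
qed

lemma mfact_double: "mfact d (\<lambda>i. 2 * n i) \<le> 4 ^ mabs d n * (mfact d n)\<^sup>2"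
proof -
  have "mfact d (\<lambda>i. 2 * n i) = (\<Prod>i<d. fact (2 * n i))" by (simp add: mfact_def)
  also have "\<dots> \<le> (\<Prod>i<d. 4 ^ n i * (fact (n i))\<^sup>2)"
    by (intro prod_mono conjI fact_double) auto
  also have "\<dots> = 4 ^ mabs d n * (mfact d n)\<^sup>2"
    by (simp add: prod.distrib mfact_def mabs_def power_sum prod_power_distrib)
  finally show ?thesis .
qed

lemma mfact_pos: "0 < mfact d n"
  by (simp add: mfact_def prod_pos)


lemma hf_cont: "continuous_on S (hermite_fun k)"
  unfolding hermite_fun_def by (intro continuous_intros hp_cont) auto

lemma hf_abs_int: "set_integrable lborel {0..T} (\<lambda>x. \<bar>hermite_fun k x\<bar>)"
  by (intro borel_integrable_atLeastAtMost' continuous_intros hf_cont)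

lemma hf_abs_bound:
  assumes T: "0 \<le> T"
  shows "(LINT x:{0..T}|lborel. \<bar>hermite_fun k x\<bar>) \<le> (T + 1) / 2"
proof -
  have i2: "set_integrable lborel {0..T} (\<lambda>x. (hermite_fun k x)\<^sup>2)"
    by (intro borel_integrable_atLeastAtMost' continuous_intros hf_cont)
  have i1: "set_integrable lborel {0..T} (\<lambda>x. 1::real)"
    by (intro borel_integrable_atLeastAtMost' continuous_intros)
  have "(LINT x:{0..T}|lborel. \<bar>hermite_fun k x\<bar>) \<le> (LINT x:{0..T}|lborel. (1 + (hermite_fun k x)\<^sup>2) / 2)"
  proof (rule set_integral_mono[OF hf_abs_int])
    show "set_integrable lborel {0..T} (\<lambda>x. (1 + (hermite_fun k x)\<^sup>2) / 2)"
      by (intro borel_integrable_atLeastAtMost' continuous_intros hf_cont) auto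
    fix x :: real
    have "0 \<le> (\<bar>hermite_fun k x\<bar> - 1)\<^sup>2" by simp
    then show "\<bar>hermite_fun k x\<bar> \<le> (1 + (hermite_fun k x)\<^sup>2) / 2"
      by (simp add: power2_eq_square algebra_simps)
  qed
  also have "\<dots> = ((LINT x:{0..T}|lborel. 1) + (LINT x:{0..T}|lborel. (hermite_fun k x)\<^sup>2)) / 2"
    using i1 i2 by (simp add: set_integral_divide_zero set_integral_add set_integrable_def set_lebesgue_integral_def
        Bochner_Integration.integral_add[symmetric] distrib_left)
  also have "(LINT x:{0..T}|lborel. (1::real)) = T"
    using T by (simp add: set_integral_const)
  also have "(LINT x:{0..T}|lborel. (hermite_fun k x)\<^sup>2) \<le> (\<integral>x. (hermite_fun k x)\<^sup>2 \<partial>lborel)"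
    unfolding set_lebesgue_integral_def
    using i2 hf_sq_int by (intro integral_mono) (auto simp: set_integrable_def indicator_def)
  also have "\<dots> = 1" by (rule hf_norm)
  finally show ?thesis by simp
qed

lemma coeff_bound:
  fixes F :: "(nat \<Rightarrow> real) \<Rightarrow> real"
  assumes Fm: "F \<in> borel_measurable (PiM {..<K} (\<lambda>_. lborel))"
    and Fb: "\<And>x. \<bar>F x\<bar> \<le> B * (\<Prod>j<K. indicator {0..T} (x j))"
    and T: "0 \<le> T" and B: "0 \<le> B"
  shows "integrable (PiM {..<K} (\<lambda>_. lborel)) (\<lambda>x. F x * herm_test K \<kappa> x)"
    "\<bar>herm_coeff K F \<kappa>\<bar> \<le> B * ((T + 1) / 2) ^ K"
proof -
  interpret product_sigma_finite "\<lambda>_::nat. lborel :: real measure" by standard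
  define g where "g = (\<lambda>j y. indicator {0..T} y * \<bar>hermite_fun (\<kappa> j) y\<bar> :: real)"
  have gi: "integrable lborel (g j)" for j
    using hf_abs_int[of T "\<kappa> j"] by (simp add: set_integrable_def g_def)
  have Gi: "integrable (PiM {..<K} (\<lambda>_. lborel)) (\<lambda>x. B * (\<Prod>j\<in>{..<K}. g j (x j)))"
    by (intro integrable_mult_right product_integrable_prod gi) auto
  have htm: "herm_test K \<kappa> \<in> borel_measurable (PiM {..<K} (\<lambda>_. lborel))"
    unfolding herm_test_def by measurable
  have bnd: "\<bar>F x * herm_test K \<kappa> x\<bar> \<le> B * (\<Prod>j\<in>{..<K}. g j (x j))" for x
  proof -
    have "\<bar>F x * herm_test K \<kappa> x\<bar> = \<bar>F x\<bar> * (\<Prod>j<K. \<bar>hermite_fun (\<kappa> j) (x j)\<bar>)"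
      by (simp add: herm_test_def abs_mult abs_prod)
    also have "\<dots> \<le> B * (\<Prod>j<K. indicator {0..T} (x j)) * (\<Prod>j<K. \<bar>hermite_fun (\<kappa> j) (x j)\<bar>)"
      by (intro mult_right_mono Fb) (auto intro: prod_nonneg)
    also have "\<dots> = B * (\<Prod>j\<in>{..<K}. g j (x j))"
      by (simp add: g_def prod.distrib)
    finally show ?thesis .
  qed
  show I: "integrable (PiM {..<K} (\<lambda>_. lborel)) (\<lambda>x. F x * herm_test K \<kappa> x)"
  proof (rule Bochner_Integration.integrable_bound[OF Gi])
    show "(\<lambda>x. F x * herm_test K \<kappa> x) \<in> borel_measurable (PiM {..<K} (\<lambda>_. lborel))"
      using Fm htm by measurable
    show "AE x in PiM {..<K} (\<lambda>_. lborel). norm (F x * herm_test K \<kappa> x) \<le> norm (B * (\<Prod>j\<in>{..<K}. g j (x j)))"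
      by (rule AE_I2) (metis bnd abs_ge_self order_trans real_norm_def)
  qed
  have "\<bar>herm_coeff K F \<kappa>\<bar> \<le> (\<integral>x. \<bar>F x * herm_test K \<kappa> x\<bar> \<partial>PiM {..<K} (\<lambda>_. lborel))"
    unfolding herm_coeff_def by (rule integral_abs_bound)
  also have "\<dots> \<le> (\<integral>x. B * (\<Prod>j\<in>{..<K}. g j (x j)) \<partial>PiM {..<K} (\<lambda>_. lborel))"
    using I Gi bnd by (intro integral_mono) auto
  also have "\<dots> = B * (\<Prod>j\<in>{..<K}. integral\<^sup>L lborel (g j))"
    using gi by (simp add: product_integral_prod)
  also have "\<dots> \<le> B * (\<Prod>j\<in>{..<K}. (T + 1) / 2)"
  proof (intro mult_left_mono prod_mono conjI B)
    fix j
    show "0 \<le> integral\<^sup>L lborel (g j)" unfolding g_def by (intro integral_nonneg_AE) auto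
    show "integral\<^sup>L lborel (g j) \<le> (T + 1) / 2"
      using hf_abs_bound[OF T, of "\<kappa> j"] by (simp add: g_def set_lebesgue_integral_def)
  qed
  finally show "\<bar>herm_coeff K F \<kappa>\<bar> \<le> B * ((T + 1) / 2) ^ K" by simp
qed


definition Gset :: "real \<Rightarrow> real \<Rightarrow> (real \<times> real) set" where
  "Gset T \<Lambda> = {t. 0 < fst t \<and> fst t < snd t \<and> snd t < T \<and> snd t - fst t > \<Lambda>}"

lemma Gset_sets: "Gset T \<Lambda> \<in> sets lborel"
  unfolding Gset_def by (rule pred_set) measurable

lemma Gset_fin: "emeasure lborel (Gset T \<Lambda>) < \<infinity>"
  using Gset_sets by (intro box_fin[of _ T]) (auto simp: Gset_def)

lemma SILT_gap_eq:
  assumes "n \<in> multi_indices d" "N \<le> mabs d n"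
  shows "SILT_gap d N T \<Lambda> (\<lambda>i. 2 * n i) x = (\<integral>t. indicator (Gset T \<Lambda>) t * psi d n (fst t) (snd t) x \<partial>lborel)"
  unfolding SILT_double(2)[OF assms] cp_set Gset_def set_lebesgue_integral_def by simp

lemma kernel_meas:
  "(\<lambda>x. \<integral>t. indicator (Gset T \<Lambda>) t * psi d n (fst t) (snd t) x \<partial>lborel)
    \<in> borel_measurable (PiM {..<2 * mabs d n} (\<lambda>_. lborel))"
proof (rule lborel.borel_measurable_lebesgue_integral)
  have j: "(\<lambda>p. psi d n (fst (snd p)) (snd (snd p)) (fst p)) \<in> borel_measurable (PiM {..<2 * mabs d n} (\<lambda>_. lborel) \<Otimes>\<^sub>M (lborel :: (real \<times> real) measure))"
    using psi_meas_joint[of d n] unfolding lborel_prod .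
  have g: "(\<lambda>p. indicator (Gset T \<Lambda>) (snd p) :: real) \<in> borel_measurable (PiM {..<2 * mabs d n} (\<lambda>_. lborel) \<Otimes>\<^sub>M (lborel :: (real \<times> real) measure))"
    using Gset_sets by measurable
  show "(\<lambda>(x, t). indicator (Gset T \<Lambda>) t * psi d n (fst t) (snd t) x) \<in> borel_measurable (PiM {..<2 * mabs d n} (\<lambda>_. lborel) \<Otimes>\<^sub>M lborel)"
    using borel_measurable_times[OF g j] by (simp add: case_prod_unfold)
qed

lemma kernel_bound:
  assumes K: "0 < mabs d n" and L: "0 < \<Lambda>"
  shows "\<bar>\<integral>t. indicator (Gset T \<Lambda>) t * psi d n (fst t) (snd t) x \<partial>lborel\<bar>
     \<le> (\<bar>Cn d n\<bar> * \<Lambda> powr (- alph d n) * measure lborel (Gset T \<Lambda>)) * (\<Prod>j<2 * mabs d n. indicator {0..T} (x j))"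
proof -
  let ?G = "Gset T \<Lambda>"
  let ?c = "\<bar>Cn d n\<bar> * \<Lambda> powr (- alph d n)"
  have pb: "\<bar>indicator ?G t * psi d n (fst t) (snd t) x\<bar> \<le> ?c * indicator ?G t" for t
  proof (cases "t \<in> ?G")
    case True
    then have "\<Lambda> < snd t - fst t" by (simp add: Gset_def)
    then show ?thesis using True psi_bound_gap[OF K _ L] by simp
  qed simp
  have ci: "integrable lborel (\<lambda>t. ?c * indicator ?G t)"
    using Gset_sets Gset_fin by (intro integrable_mult_right integrable_real_indicator) auto
  have fi: "integrable lborel (\<lambda>t. indicator ?G t * psi d n (fst t) (snd t) x)"
  proof (rule Bochner_Integration.integrable_bound[OF ci])
    show "(\<lambda>t. indicator ?G t * psi d n (fst t) (snd t) x) \<in> borel_measurable lborel"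
      using Gset_sets psi_meas[of d n x] by measurable
    show "AE t in lborel. norm (indicator ?G t * psi d n (fst t) (snd t) x) \<le> norm (?c * indicator ?G t)"
      by (rule AE_I2) (metis pb abs_ge_self order_trans real_norm_def)
  qed
  have b1: "\<bar>\<integral>t. indicator ?G t * psi d n (fst t) (snd t) x \<partial>lborel\<bar> \<le> ?c * measure lborel ?G"
  proof -
    have "\<bar>\<integral>t. indicator ?G t * psi d n (fst t) (snd t) x \<partial>lborel\<bar> \<le> (\<integral>t. \<bar>indicator ?G t * psi d n (fst t) (snd t) x\<bar> \<partial>lborel)"
      by (rule integral_abs_bound)
    also have "\<dots> \<le> (\<integral>t. ?c * indicator ?G t \<partial>lborel)"
      using fi ci pb by (intro integral_mono) auto
    also have "\<dots> = ?c * measure lborel ?G"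
      using Gset_sets Gset_fin by simp
    finally show ?thesis .
  qed
  show ?thesis
  proof (cases "\<forall>j<2 * mabs d n. x j \<in> {0..T}")
    case True
    then have "(\<Prod>j<2 * mabs d n. indicator {0..T} (x j) :: real) = 1" by (simp add: indicator_def)
    then show ?thesis using b1 by simp
  next
    case False
    then obtain j where j: "j < 2 * mabs d n" "x j < 0 \<or> T < x j" by auto
    have z: "indicator ?G t * psi d n (fst t) (snd t) x = 0" for t
    proof (cases "t \<in> ?G")
      case True
      then have "x j < fst t \<or> snd t < x j" using j by (auto simp: Gset_def)
      then show ?thesis using psi_zero_out[OF j(1)] by simp
    qed simp
    have "(\<integral>t. indicator ?G t * psi d n (fst t) (snd t) x \<partial>lborel) = 0" by (simp add: z)
    then show ?thesis
      by (auto intro!: mult_nonneg_nonneg prod_nonneg measure_nonneg)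
  qed
qed


lemma neg_norm_bound:
  assumes c: "\<And>\<kappa>. \<bar>herm_coeff K F \<kappa>\<bar> \<le> M"
  shows "neg_norm2 p K F \<le> ennreal (M\<^sup>2) * (\<integral>\<^sup>+ k. ennreal (1 / (2 * real k + 2) ^ (2 * p)) \<partial>count_space UNIV) ^ K"
proof -
  have "neg_norm2 p K F \<le> (\<integral>\<^sup>+ \<kappa>. ennreal (M\<^sup>2) * (\<Prod>j<K. ennreal (1 / (2 * real (\<kappa> j) + 2) ^ (2 * p)))
      \<partial>count_space (PiE {..<K} (\<lambda>_. UNIV)))"
    unfolding neg_norm2_def
  proof (rule nn_integral_mono)
    fix \<kappa> :: "nat \<Rightarrow> nat"
    let ?w = "(\<Prod>j<K. 1 / (2 * real (\<kappa> j) + 2) ^ (2 * p))"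
    have w0: "0 \<le> ?w" by (intro prod_nonneg) auto
    have "(herm_coeff K F \<kappa>)\<^sup>2 \<le> M\<^sup>2"
      using c[of \<kappa>] by (metis abs_ge_zero abs_le_square_iff abs_of_nonneg order_trans power2_abs)
    then have "?w * (herm_coeff K F \<kappa>)\<^sup>2 \<le> M\<^sup>2 * ?w"
      using w0 mult_right_mono[of "(herm_coeff K F \<kappa>)\<^sup>2" "M\<^sup>2" ?w] by (simp add: mult.commute)
    then have "ennreal (?w * (herm_coeff K F \<kappa>)\<^sup>2) \<le> ennreal (M\<^sup>2 * ?w)" by (rule ennreal_leI)
    also have "\<dots> = ennreal (M\<^sup>2) * ennreal ?w" by (simp add: ennreal_mult w0)
    also have "ennreal ?w = (\<Prod>j<K. ennreal (1 / (2 * real (\<kappa> j) + 2) ^ (2 * p)))"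
      by (rule prod_ennreal[symmetric]) auto
    finally show "ennreal (?w * (herm_coeff K F \<kappa>)\<^sup>2) \<le> ennreal (M\<^sup>2) * (\<Prod>j<K. ennreal (1 / (2 * real (\<kappa> j) + 2) ^ (2 * p)))" .
  qed
  also have "\<dots> = ennreal (M\<^sup>2) * (\<integral>\<^sup>+ \<kappa>. (\<Prod>j<K. ennreal (1 / (2 * real (\<kappa> j) + 2) ^ (2 * p))) \<partial>count_space (PiE {..<K} (\<lambda>_. UNIV)))"
    by (rule nn_integral_cmult) simp
  also have "\<dots> = ennreal (M\<^sup>2) * (\<integral>\<^sup>+ k. ennreal (1 / (2 * real k + 2) ^ (2 * p)) \<partial>count_space UNIV) ^ K"
    using PiE_prod_nn[where f="\<lambda>k. ennreal (1 / (2 * real k + 2) ^ (2 * p))" and K=K] by simp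
  finally show ?thesis .
qed

definition Zc :: real where "Zc = (\<Sum>k. 1 / (real k + 1)\<^sup>2)"

lemma Zc_summable: "summable (\<lambda>k. 1 / (real k + 1)\<^sup>2)"
proof -
  have "summable (\<lambda>n. inverse (real n ^ 2))" by (rule inverse_power_summable) simp
  then have "summable (\<lambda>k. inverse (real (Suc k) ^ 2))"
    by (subst summable_Suc_iff)
  then show ?thesis by (simp add: field_simps add.commute)
qed

lemma W_bound:
  assumes p: "1 \<le> p"
  shows "(\<integral>\<^sup>+ k. ennreal (1 / (2 * real k + 2) ^ (2 * p)) \<partial>count_space UNIV) \<le> ennreal (Zc / 4 ^ p)"
proof -
  have le: "1 / (2 * real k + 2) ^ (2 * p) \<le> (1 / 4 ^ p) * (1 / (real k + 1)\<^sup>2)" for k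
  proof -
    have "(2 * real k + 2) ^ (2 * p) = 4 ^ p * ((real k + 1) ^ 2) ^ p"
      by (simp add: power_mult power_mult_distrib[symmetric] algebra_simps power2_eq_square)
    moreover have "(real k + 1)\<^sup>2 \<le> ((real k + 1) ^ 2) ^ p"
      using p by (metis one_le_power power_one_right power_increasing le_add_same_cancel2 of_nat_0_le_iff)
    ultimately show ?thesis
      by (simp add: divide_simps)
  qed
  have s: "summable (\<lambda>k. (1 / 4 ^ p) * (1 / (real k + 1)\<^sup>2))"
    by (intro summable_mult Zc_summable)
  have "(\<integral>\<^sup>+ k. ennreal (1 / (2 * real k + 2) ^ (2 * p)) \<partial>count_space UNIV) = (\<Sum>k. ennreal (1 / (2 * real k + 2) ^ (2 * p)))"
    by (rule nn_integral_count_space_nat)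
  also have "\<dots> \<le> (\<Sum>k. ennreal ((1 / 4 ^ p) * (1 / (real k + 1)\<^sup>2)))"
    by (intro suminf_le ennreal_leI le) auto
  also have "\<dots> = ennreal (\<Sum>k. (1 / 4 ^ p) * (1 / (real k + 1)\<^sup>2))"
    by (rule suminf_ennreal2[OF _ s]) simp
  also have "(\<Sum>k. (1 / 4 ^ p) * (1 / (real k + 1)\<^sup>2)) = Zc / 4 ^ p"
    unfolding Zc_def using suminf_mult[OF Zc_summable, of "1 / 4 ^ p"] by simp
  finally show ?thesis .
qed

lemma Zc_nonneg: "0 \<le> Zc"
  unfolding Zc_def by (intro suminf_nonneg Zc_summable) auto


lemma arith_core:
  fixes mfm mfn a L0 L mG R Wr :: real
  assumes mf: "mfm \<le> 4^k * mfn\<^sup>2" and pos: "0 < mfn" "0 < L" "0 \<le> a" "0 \<le> L0" "0 \<le> mG" "0 \<le> R" "0 \<le> Wr"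
    and q: "(1/L) * R^2 * Wr \<le> 1/2"
  shows "mfm * ((1/mfn * a * (1/2)^k * (L0 * (1/L)^k) * mG) * R^(2*k))\<^sup>2 * Wr^(2*k) \<le> (a*L0*mG)\<^sup>2 * (1/2)^(2*k)"
proof -
  let ?X = "((1/mfn * a * (1/2)^k * (L0 * (1/L)^k) * mG) * R^(2*k))\<^sup>2 * Wr^(2*k)"
  have X0: "0 \<le> ?X" using pos by simp
  have "mfm * ?X \<le> (4^k * mfn\<^sup>2) * ?X" using mult_right_mono[OF mf X0] .
  also have "(4^k * mfn\<^sup>2) * ?X = (a*L0*mG)\<^sup>2 * ((1/L) * R^2 * Wr)^(2*k)"
  proof -
    have e1: "(4::real)^k * ((1/2)^k)\<^sup>2 = 1"
      by (simp add: power2_eq_square power_mult_distrib[symmetric])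
    have ring: "(F * m\<^sup>2) * (((i * a * h * (L0 * l) * mG) * r)\<^sup>2 * w) = (F * h\<^sup>2) * (m * i)\<^sup>2 * (a*L0*mG)\<^sup>2 * (l\<^sup>2 * r\<^sup>2 * w)"
      for F m i h l r w :: real
      by (simp add: power2_eq_square mult_ac)
    have "(4^k * mfn\<^sup>2) * ?X = (4^k * ((1/2)^k)\<^sup>2) * (mfn * (1/mfn))\<^sup>2 * (a*L0*mG)\<^sup>2 * (((1/L)^k)\<^sup>2 * (R^(2*k))\<^sup>2 * Wr^(2*k))"
      by (rule ring)
    also have "\<dots> = (a*L0*mG)\<^sup>2 * (((1/L)^k)\<^sup>2 * (R^(2*k))\<^sup>2 * Wr^(2*k))"
    proof -
      have e2: "mfn * (1/mfn) = 1" using pos by simp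
      show ?thesis unfolding e1 e2 by simp
    qed
    also have "((1/L)^k)\<^sup>2 * (R^(2*k))\<^sup>2 * Wr^(2*k) = ((1/L) * R^2 * Wr)^(2*k)"
    proof -
      have "((1/L) * R^2 * Wr)^(2*k) = (1/L)^(2*k) * (R^2)^(2*k) * Wr^(2*k)" by (simp only: power_mult_distrib)
      also have "(1/L)^(2*k) = ((1/L)^k)\<^sup>2" by (simp only: power_mult mult.commute[of 2 k])
      also have "(R^2)^(2*k) = (R^(2*k))\<^sup>2"
        by (simp only: power_mult[symmetric] mult.commute)
      finally show ?thesis by simp
    qed
    finally show ?thesis .
  qed
  also have "\<dots> \<le> (a*L0*mG)\<^sup>2 * (1/2)^(2*k)"
    using pos q by (intro mult_left_mono power_mono) auto
  finally show ?thesis by (simp only: mult.assoc)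
qed

lemma Cn_abs: "\<bar>Cn d n\<bar> = 1 / mfact d n * (2 * pi) powr (- (real d / 2)) * (1/2) ^ mabs d n"
  unfolding Cn_def using mfact_pos[of d n] by (simp add: abs_mult power_abs)

lemma Lpow:
  assumes "0 < \<Lambda>"
  shows "\<Lambda> powr (- alph d n) = \<Lambda> powr (- (real d / 2)) * (1 / \<Lambda>) ^ mabs d n"
proof -
  have "\<Lambda> powr (- alph d n) = \<Lambda> powr (- (real d / 2) + - real (mabs d n))"
    by (simp add: alph_def)
  also have "\<dots> = \<Lambda> powr (- (real d / 2)) * \<Lambda> powr (- real (mabs d n))"
    by (rule powr_add)
  also have "\<Lambda> powr (- real (mabs d n)) = (1 / \<Lambda>) ^ mabs d n"
    using assms by (simp add: powr_minus powr_realpow power_one_over inverse_eq_divide)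
  finally show ?thesis .
qed

lemma even_decomp:
  assumes "m \<in> multi_indices d" "\<forall>i. even (m i)"
  shows "m = (\<lambda>i. 2 * (m i div 2))" "(\<lambda>i. m i div 2) \<in> multi_indices d"
  using assms by (auto simp: multi_indices_def fun_eq_iff)

lemma SILT_gap_out: "m \<notin> multi_indices d \<Longrightarrow> SILT_gap d N T \<Lambda> m x = 0"
  unfolding SILT_gap_def hida_integral_def case_prod_app by (simp add: delta_trunc_def)

lemma neg_norm2_zero: "neg_norm2 p K (\<lambda>x. 0) = 0"
  unfolding neg_norm2_def herm_coeff_def by simp

lemma exists_p:
  fixes X :: real
  shows "\<exists>p::nat. 1 \<le> p \<and> X \<le> 4 ^ p"
proof -
  obtain p :: nat where "X \<le> real p" using real_arch_simple by blast
  then have a: "X \<le> real (max 1 p)" by simp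
  have b: "real (max 1 p) < 2 ^ max 1 p" by (rule of_nat_less_two_power)
  have c: "(2::real) ^ max 1 p \<le> 4 ^ max 1 p" by (rule power_mono) auto
  from a b c have "X \<le> 4 ^ max 1 p" by linarith
  then show ?thesis by (intro exI[of _ "max 1 p"]) auto
qed


lemma hida_gap:
  assumes d: "1 \<le> d" and N: "1 \<le> N" and T: "0 < T" and L: "0 < \<Lambda>"
  shows "hida_dist d (SILT_gap d N T \<Lambda>)"
proof -
  let ?\<Phi> = "SILT_gap d N T \<Lambda>"
  let ?G = "Gset T \<Lambda>"
  define mG where "mG = measure lborel ?G"
  define R where "R = (T + 1) / 2"
  define a where "a = (2 * pi) powr (- (real d / 2))"
  define L0 where "L0 = \<Lambda> powr (- (real d / 2))"
  define F where "F = (\<lambda>n x. \<integral>t. indicator ?G t * psi d n (fst t) (snd t) x \<partial>lborel)"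
  define B where "B = (\<lambda>n. \<bar>Cn d n\<bar> * \<Lambda> powr (- alph d n) * mG)"
  have mG0: "0 \<le> mG" by (simp add: mG_def)
  have R0: "0 < R" using T by (simp add: R_def)
  have a0: "0 \<le> a" by (simp add: a_def)
  have L00: "0 \<le> L0" by (simp add: L0_def)
  have B0: "0 \<le> B n" for n using mG0 by (simp add: B_def)
  have Beq: "B n = 1 / mfact d n * a * (1/2) ^ mabs d n * (L0 * (1 / \<Lambda>) ^ mabs d n) * mG" for n
    unfolding B_def Cn_abs Lpow[OF L] a_def L0_def by simp
  have zero_case: "?\<Phi> m = (\<lambda>x. 0)" if "(\<exists>i. odd (m i)) \<or> mabs d m < 2 * N" for m
    using SILT_zero(2)[OF that] by (simp add: fun_eq_iff)
  have even_case: "\<exists>n. m = (\<lambda>i. 2 * n i) \<and> n \<in> multi_indices d \<and> N \<le> mabs d n \<and> 0 < mabs d n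
        \<and> ?\<Phi> m = F n \<and> mabs d m = 2 * mabs d n"
    if m: "m \<in> multi_indices d" "\<not> ((\<exists>i. odd (m i)) \<or> mabs d m < 2 * N)" for m
  proof -
    define n where "n = (\<lambda>i. m i div 2)"
    have ev: "\<forall>i. even (m i)" using m(2) by blast
    have mn: "m = (\<lambda>i. 2 * n i)" unfolding n_def by (rule even_decomp(1)[OF m(1) ev])
    have nm: "n \<in> multi_indices d" unfolding n_def by (rule even_decomp(2)[OF m(1) ev])
    have ma: "mabs d m = 2 * mabs d n" by (subst mn) (rule mabs_double)
    have Nn: "N \<le> mabs d n" using m(2) ma by simp
    have "?\<Phi> m = F n"
      unfolding F_def by (subst mn, rule ext, rule SILT_gap_eq[OF nm Nn])
    moreover have "0 < mabs d n" using Nn N by simp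
    ultimately show ?thesis using mn nm Nn ma by blast
  qed
  have coeffs: "integrable (PiM {..<2 * mabs d n} (\<lambda>_. lborel)) (\<lambda>x. F n x * herm_test (2 * mabs d n) \<kappa> x)
      \<and> \<bar>herm_coeff (2 * mabs d n) (F n) \<kappa>\<bar> \<le> B n * R ^ (2 * mabs d n)"
    if K: "0 < mabs d n" for n \<kappa>
  proof -
    have Fm: "F n \<in> borel_measurable (PiM {..<2 * mabs d n} (\<lambda>_. lborel))"
      unfolding F_def by (rule kernel_meas)
    have Fb: "\<bar>F n x\<bar> \<le> B n * (\<Prod>j<2 * mabs d n. indicator {0..T} (x j))" for x
      unfolding F_def B_def mG_def by (rule kernel_bound[OF K L])
    show ?thesis using coeff_bound[OF Fm Fb _ B0, of \<kappa>] T by (simp add: R_def)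
  qed
  obtain p :: nat where p: "1 \<le> p" "2 * Zc * R^2 / \<Lambda> \<le> 4 ^ p" using exists_p by blast
  define Wr where "Wr = Zc / 4 ^ p"
  have Wr0: "0 \<le> Wr" using Zc_nonneg by (simp add: Wr_def)
  have q: "(1 / \<Lambda>) * R^2 * Wr \<le> 1/2"
  proof -
    have "2 * Zc * R^2 \<le> 4 ^ p * \<Lambda>" using p(2) L by (simp add: divide_le_eq mult.commute)
    then show ?thesis using L by (simp add: Wr_def field_simps)
  qed
  define C0 where "C0 = (a * L0 * mG)\<^sup>2"
  have tb: "ennreal (mfact d m) * neg_norm2 p (mabs d m) (?\<Phi> m) \<le> ennreal C0 * (\<Prod>i<d. ennreal ((1/2::real) ^ m i))"
    if m: "m \<in> multi_indices d" for m
  proof (cases "(\<exists>i. odd (m i)) \<or> mabs d m < 2 * N")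
    case True
    then show ?thesis by (simp add: zero_case neg_norm2_zero)
  next
    case False
    obtain n where n: "m = (\<lambda>i. 2 * n i)" "n \<in> multi_indices d" "N \<le> mabs d n" "0 < mabs d n"
      "?\<Phi> m = F n" "mabs d m = 2 * mabs d n"
      using even_case[OF m False] by blast
    let ?k = "mabs d n"
    let ?M = "B n * R ^ (2 * ?k)"
    have c: "\<bar>herm_coeff (2 * ?k) (F n) \<kappa>\<bar> \<le> ?M" for \<kappa> using coeffs[OF n(4)] by blast
    have "neg_norm2 p (mabs d m) (?\<Phi> m) \<le> ennreal (?M\<^sup>2) * (\<integral>\<^sup>+ k. ennreal (1 / (2 * real k + 2) ^ (2 * p)) \<partial>count_space UNIV) ^ (2 * ?k)"
      unfolding n(5,6) by (rule neg_norm_bound[OF c])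
    also have "\<dots> \<le> ennreal (?M\<^sup>2) * ennreal Wr ^ (2 * ?k)"
      by (intro mult_left_mono power_mono W_bound[OF p(1), folded Wr_def]) auto
    also have "\<dots> = ennreal (?M\<^sup>2 * Wr ^ (2 * ?k))"
      using Wr0 by (simp add: ennreal_mult ennreal_power)
    finally have nb: "neg_norm2 p (mabs d m) (?\<Phi> m) \<le> ennreal (?M\<^sup>2 * Wr ^ (2 * ?k))" .
    have "ennreal (mfact d m) * neg_norm2 p (mabs d m) (?\<Phi> m) \<le> ennreal (mfact d m) * ennreal (?M\<^sup>2 * Wr ^ (2 * ?k))"
      by (rule mult_left_mono[OF nb]) simp
    also have "\<dots> = ennreal (mfact d m * (?M\<^sup>2 * Wr ^ (2 * ?k)))"
      using mfact_pos[of d m] by (simp add: ennreal_mult)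
    also have "\<dots> \<le> ennreal (C0 * (1/2) ^ (2 * ?k))"
    proof (rule ennreal_leI)
      have mf: "mfact d m \<le> 4 ^ ?k * (mfact d n)\<^sup>2" using mfact_double[of d n] n(1) by simp
      have "mfact d m * ((1 / mfact d n * a * (1/2) ^ ?k * (L0 * (1 / \<Lambda>) ^ ?k) * mG) * R ^ (2 * ?k))\<^sup>2 * Wr ^ (2 * ?k)
          \<le> (a * L0 * mG)\<^sup>2 * (1/2) ^ (2 * ?k)"
        by (rule arith_core[OF mf mfact_pos L a0 L00 mG0 less_imp_le[OF R0] Wr0 q])
      then show "mfact d m * (?M\<^sup>2 * Wr ^ (2 * ?k)) \<le> C0 * (1/2) ^ (2 * ?k)"
        by (simp add: Beq C0_def mult.assoc)
    qed
    also have "\<dots> = ennreal C0 * (\<Prod>i<d. ennreal ((1/2::real) ^ m i))"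
    proof -
      have "(\<Prod>i<d. ennreal ((1/2::real) ^ m i)) = ennreal (\<Prod>i<d. (1/2::real) ^ m i)"
        by (rule prod_ennreal) simp
      also have "(\<Prod>i<d. (1/2::real) ^ m i) = (1/2) ^ mabs d m"
        by (simp add: mabs_def power_sum)
      finally show ?thesis using n(6) by (simp add: C0_def ennreal_mult)
    qed
    finally show ?thesis .
  qed
  have fin: "(\<integral>\<^sup>+ m. ennreal (mfact d m) * neg_norm2 p (mabs d m) (?\<Phi> m) \<partial>count_space (multi_indices d)) < \<infinity>"
  proof -
    have "(\<integral>\<^sup>+ m. ennreal (mfact d m) * neg_norm2 p (mabs d m) (?\<Phi> m) \<partial>count_space (multi_indices d))
        \<le> (\<integral>\<^sup>+ m. ennreal C0 * (\<Prod>i<d. ennreal ((1/2::real) ^ m i)) \<partial>count_space (multi_indices d))"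
      by (rule nn_integral_mono) (simp add: tb)
    also have "\<dots> = ennreal C0 * (\<integral>\<^sup>+ m. (\<Prod>i<d. ennreal ((1/2::real) ^ m i)) \<partial>count_space (multi_indices d))"
      by (rule nn_integral_cmult) simp
    also have "\<dots> = ennreal C0 * 2 ^ d"
      using multi_prod_nn[where f="\<lambda>k. ennreal ((1/2::real) ^ k)" and d=d] geom_nn by simp
    also have "\<dots> < \<infinity>" by (simp add: ennreal_mult_less_top power_less_top_ennreal)
    finally show ?thesis .
  qed
  show ?thesis
    unfolding hida_dist_def
  proof (intro conjI allI impI ballI)
    show "?\<Phi> m x = 0" if "m \<notin> multi_indices d" for m x using SILT_gap_out[OF that] .
    show "integrable (PiM {..<mabs d m} (\<lambda>_. lborel)) (\<lambda>x. ?\<Phi> m x * herm_test (mabs d m) \<kappa> x)"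
      if m: "m \<in> multi_indices d" for m \<kappa>
    proof (cases "(\<exists>i. odd (m i)) \<or> mabs d m < 2 * N")
      case True
      then show ?thesis by (simp add: zero_case)
    next
      case False
      obtain n where n: "0 < mabs d n" "?\<Phi> m = F n" "mabs d m = 2 * mabs d n"
        using even_case[OF m False] by blast
      show ?thesis unfolding n(2,3) using coeffs[OF n(1)] by blast
    qed
    show "\<exists>p. (\<integral>\<^sup>+ m. ennreal (mfact d m) * neg_norm2 p (mabs d m) (?\<Phi> m) \<partial>count_space (multi_indices d)) < \<infinity>"
      using fin by blast
  qed
qed


theorem mainTheorem1:
  fixes d N :: nat and T \<Lambda> :: real
  assumes "d \<ge> 1" and "N \<ge> 1" and "2 * real N > real d - 2"
    and "T > 0" and "0 < \<Lambda>" and "\<Lambda> < T"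
  shows
    "hida_dist d (SILT_gap d N T \<Lambda>)
     \<and> (\<forall>m \<in> multi_indices d. ((\<exists>i. odd (m i)) \<or> mabs d m < 2 * N) \<longrightarrow>
          (\<forall>x. SILT_gap d N T \<Lambda> m x = 0 \<and> SILT d N T m x = 0))
     \<and> (\<forall>n \<in> multi_indices d. mabs d n \<ge> N \<longrightarrow>
          (\<forall>x. kmin (2 * mabs d n) x < kmax (2 * mabs d n) x \<longrightarrow>
             SILT_gap d N T \<Lambda> (\<lambda>i. 2 * n i) x
               = SILT d N T (\<lambda>i. 2 * n i) x
                 - Theta (\<Lambda> - (kmax (2 * mabs d n) x - kmin (2 * mabs d n) x)) * rho d T \<Lambda> n x
             \<and> SILT d N T (\<lambda>i. 2 * n i) x - SILT_gap d N T \<Lambda> (\<lambda>i. 2 * n i) x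
               = Theta (\<Lambda> - (kmax (2 * mabs d n) x - kmin (2 * mabs d n) x)) * rho d T \<Lambda> n x
             \<and> (Theta (\<Lambda> - (kmax (2 * mabs d n) x - kmin (2 * mabs d n) x)) * rho d T \<Lambda> n x \<noteq> 0
                 \<longrightarrow> 0 < kmin (2 * mabs d n) x \<and> kmax (2 * mabs d n) x < T
                     \<and> kmax (2 * mabs d n) x - kmin (2 * mabs d n) x < \<Lambda>)))
     \<and> (\<forall>n \<in> multi_indices d. mabs d n \<ge> N \<longrightarrow>
          (\<forall>x. \<Lambda> < kmax (2 * mabs d n) x \<and> kmin (2 * mabs d n) x < T - \<Lambda>
               \<and> kmin (2 * mabs d n) x < kmax (2 * mabs d n) x
               \<and> kmax (2 * mabs d n) x - kmin (2 * mabs d n) x < \<Lambda> \<longrightarrow>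
             (real d / 2 + real (mabs d n) \<noteq> 2 \<longrightarrow>
                rho d T \<Lambda> n x =
                  (2 * pi) powr (- (real d / 2)) / mfact d n * (- 1 / 2) ^ (mabs d n)
                  * (1 / (real d / 2 + real (mabs d n) - 1))
                  * (((kmax (2 * mabs d n) x - kmin (2 * mabs d n) x)
                        powr (- (real d / 2) - real (mabs d n) + 2)
                      - \<Lambda> powr (- (real d / 2) - real (mabs d n) + 2))
                       / (real d / 2 + real (mabs d n) - 2)
                     + (kmax (2 * mabs d n) x - kmin (2 * mabs d n) x - \<Lambda>)
                       * \<Lambda> powr (- (real d / 2) - real (mabs d n) + 1)))
             \<and> (d = 2 \<and> mabs d n = 1 \<longrightarrow>
                rho d T \<Lambda> n x =
                  1 / (4 * pi) * (ln (kmax (2 * mabs d n) x - kmin (2 * mabs d n) x) - ln \<Lambda>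
                     + (\<Lambda> - kmax (2 * mabs d n) x + kmin (2 * mabs d n) x) / \<Lambda>))))"
  proof -
  have K: "0 < mabs d n" if "N \<le> mabs d n" for n using that assms(2) by simp
  have c1: "hida_dist d (SILT_gap d N T \<Lambda>)"
    by (rule hida_gap) (use assms in auto)
  have c2: "\<forall>m \<in> multi_indices d. ((\<exists>i. odd (m i)) \<or> mabs d m < 2 * N) \<longrightarrow>
          (\<forall>x. SILT_gap d N T \<Lambda> m x = 0 \<and> SILT d N T m x = 0)"
    using SILT_zero by blast
  have c3: "\<forall>n \<in> multi_indices d. mabs d n \<ge> N \<longrightarrow>
          (\<forall>x. kmin (2 * mabs d n) x < kmax (2 * mabs d n) x \<longrightarrow>
             SILT_gap d N T \<Lambda> (\<lambda>i. 2 * n i) x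
               = SILT d N T (\<lambda>i. 2 * n i) x
                 - Theta (\<Lambda> - (kmax (2 * mabs d n) x - kmin (2 * mabs d n) x)) * rho d T \<Lambda> n x
             \<and> SILT d N T (\<lambda>i. 2 * n i) x - SILT_gap d N T \<Lambda> (\<lambda>i. 2 * n i) x
               = Theta (\<Lambda> - (kmax (2 * mabs d n) x - kmin (2 * mabs d n) x)) * rho d T \<Lambda> n x
             \<and> (Theta (\<Lambda> - (kmax (2 * mabs d n) x - kmin (2 * mabs d n) x)) * rho d T \<Lambda> n x \<noteq> 0
                 \<longrightarrow> 0 < kmin (2 * mabs d n) x \<and> kmax (2 * mabs d n) x < T
                     \<and> kmax (2 * mabs d n) x - kmin (2 * mabs d n) x < \<Lambda>))"
  proof (intro ballI impI allI conjI)
    fix n x assume n: "n \<in> multi_indices d" "N \<le> mabs d n"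
      and uv: "kmin (2 * mabs d n) x < kmax (2 * mabs d n) x"
    have e: "SILT d N T (\<lambda>i. 2 * n i) x = SILT_gap d N T \<Lambda> (\<lambda>i. 2 * n i) x
     + Theta (\<Lambda> - (kmax (2 * mabs d n) x - kmin (2 * mabs d n) x)) * rho d T \<Lambda> n x"
      by (rule part3[OF n assms(2) assms(5) uv])
    then show "SILT_gap d N T \<Lambda> (\<lambda>i. 2 * n i) x
               = SILT d N T (\<lambda>i. 2 * n i) x
                 - Theta (\<Lambda> - (kmax (2 * mabs d n) x - kmin (2 * mabs d n) x)) * rho d T \<Lambda> n x" by simp
    from e show "SILT d N T (\<lambda>i. 2 * n i) x - SILT_gap d N T \<Lambda> (\<lambda>i. 2 * n i) x
               = Theta (\<Lambda> - (kmax (2 * mabs d n) x - kmin (2 * mabs d n) x)) * rho d T \<Lambda> n x" by simp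
    assume nz: "Theta (\<Lambda> - (kmax (2 * mabs d n) x - kmin (2 * mabs d n) x)) * rho d T \<Lambda> n x \<noteq> 0"
    then have th: "Theta (\<Lambda> - (kmax (2 * mabs d n) x - kmin (2 * mabs d n) x)) \<noteq> 0"
      and rh: "rho d T \<Lambda> n x \<noteq> 0" by auto
    from th show "kmax (2 * mabs d n) x - kmin (2 * mabs d n) x < \<Lambda>"
      by (simp add: Theta_def split: if_splits)
    show "0 < kmin (2 * mabs d n) x"
    proof (rule ccontr)
      assume "\<not> 0 < kmin (2 * mabs d n) x"
      then have "{(t1, t2). 0 < t1 \<and> t1 \<le> kmin (2 * mabs d n) x \<and> kmax (2 * mabs d n) x \<le> t2
                         \<and> t2 < T \<and> t2 - t1 < \<Lambda>} = {}" (is "?S = {}") by auto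
      then have "rho d T \<Lambda> n x = 0" unfolding rho_def by (simp only:) (simp add: set_lebesgue_integral_def)
      then show False using rh by simp
    qed
    show "kmax (2 * mabs d n) x < T"
    proof (rule ccontr)
      assume "\<not> kmax (2 * mabs d n) x < T"
      then have "{(t1, t2). 0 < t1 \<and> t1 \<le> kmin (2 * mabs d n) x \<and> kmax (2 * mabs d n) x \<le> t2
                         \<and> t2 < T \<and> t2 - t1 < \<Lambda>} = {}" (is "?S = {}") by auto
      then have "rho d T \<Lambda> n x = 0" unfolding rho_def by (simp only:) (simp add: set_lebesgue_integral_def)
      then show False using rh by simp
    qed
  qed
  have c4: "\<forall>n \<in> multi_indices d. mabs d n \<ge> N \<longrightarrow>
          (\<forall>x. \<Lambda> < kmax (2 * mabs d n) x \<and> kmin (2 * mabs d n) x < T - \<Lambda>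
               \<and> kmin (2 * mabs d n) x < kmax (2 * mabs d n) x
               \<and> kmax (2 * mabs d n) x - kmin (2 * mabs d n) x < \<Lambda> \<longrightarrow>
             (real d / 2 + real (mabs d n) \<noteq> 2 \<longrightarrow>
                rho d T \<Lambda> n x =
                  (2 * pi) powr (- (real d / 2)) / mfact d n * (- 1 / 2) ^ (mabs d n)
                  * (1 / (real d / 2 + real (mabs d n) - 1))
                  * (((kmax (2 * mabs d n) x - kmin (2 * mabs d n) x)
                        powr (- (real d / 2) - real (mabs d n) + 2)
                      - \<Lambda> powr (- (real d / 2) - real (mabs d n) + 2))
                       / (real d / 2 + real (mabs d n) - 2)
                     + (kmax (2 * mabs d n) x - kmin (2 * mabs d n) x - \<Lambda>)
                       * \<Lambda> powr (- (real d / 2) - real (mabs d n) + 1)))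
             \<and> (d = 2 \<and> mabs d n = 1 \<longrightarrow>
                rho d T \<Lambda> n x =
                  1 / (4 * pi) * (ln (kmax (2 * mabs d n) x - kmin (2 * mabs d n) x) - ln \<Lambda>
                     + (\<Lambda> - kmax (2 * mabs d n) x + kmin (2 * mabs d n) x) / \<Lambda>)))"
  proof (intro ballI impI allI conjI)
    fix n x assume n: "n \<in> multi_indices d" "N \<le> mabs d n"
      and c: "\<Lambda> < kmax (2 * mabs d n) x \<and> kmin (2 * mabs d n) x < T - \<Lambda>
               \<and> kmin (2 * mabs d n) x < kmax (2 * mabs d n) x
               \<and> kmax (2 * mabs d n) x - kmin (2 * mabs d n) x < \<Lambda>"
    show "rho d T \<Lambda> n x =
                  (2 * pi) powr (- (real d / 2)) / mfact d n * (- 1 / 2) ^ (mabs d n)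
                  * (1 / (real d / 2 + real (mabs d n) - 1))
                  * (((kmax (2 * mabs d n) x - kmin (2 * mabs d n) x)
                        powr (- (real d / 2) - real (mabs d n) + 2)
                      - \<Lambda> powr (- (real d / 2) - real (mabs d n) + 2))
                       / (real d / 2 + real (mabs d n) - 2)
                     + (kmax (2 * mabs d n) x - kmin (2 * mabs d n) x - \<Lambda>)
                       * \<Lambda> powr (- (real d / 2) - real (mabs d n) + 1))"
      if "real d / 2 + real (mabs d n) \<noteq> 2"
      using part4a[OF K[OF n(2)] assms(1) that] c by blast
    show "rho d T \<Lambda> n x =
                  1 / (4 * pi) * (ln (kmax (2 * mabs d n) x - kmin (2 * mabs d n) x) - ln \<Lambda>
                     + (\<Lambda> - kmax (2 * mabs d n) x + kmin (2 * mabs d n) x) / \<Lambda>)"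
      if "d = 2 \<and> mabs d n = 1"
      using part4b[of d n \<Lambda> x T] that c n(1) by blast
  qed
  show ?thesis using c1 c2 c3 c4 by blast
qed

end
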